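(* In the setting of a generic triple $(F,G,H)$ of decorated flags in an $m$-dimensional space $V$ with volume form $\omega$, for all nonnegative integers $a,b,c$ with $a+b+c=m$ and $(a,b,c)\notin\{(m,0,0),(0,m,0),(0,0,m)\}$, $$\Delta^\ast_{a,b,c}:=\langle\omega^\ast,\ \ast f_{(m-a)}\wedge\ast g_{(m-b)}\wedge\ast h_{(m-c)}\rangle=\Delta^b_{c,0,a}.$$ That is, the coordinate $\Delta_{a,b,c}$ of the dual configuration $(\ast F,\ast G,\ast H)$ equals $\Delta^b_{c,0,a}$.
   Context: $V^\ast$ is the dual space and $\omega^\ast$ the volume form on $V^\ast$ with $\langle\omega^\ast,\omega\rangle=1$, where $\langle\cdot,\cdot\rangle:\wedge^kV\times\wedge^kV^\ast\to\mathbb Q$ is $\langle v_1\wedge\cdots\wedge v_k,\phi_1\wedge\cdots\wedge\phi_k\rangle=\det(\langle v_i,\phi_j\rangle)$. The isomorphism $\ast:\wedge^kV\to\wedge^{m-k}V^\ast$ is defined by $\langle v,\ast u\rangle=\langle u\wedge v,\omega\rangle$ for $v\in\wedge^{m-k}V$. A decorated flag is $F_1\subset\cdots\subset F_{m-1}$ with nonzero $f_{(i)}\in\wedge^iF_i$; $f_{(0)}=1$, $f_{(m)}$ normalized by $\langle f_{(m)},\omega\rangle=1$; its dual $\ast F$ is the flag $F_{m-1}^\perp\subset\cdots\subset F_1^\perp$ in $V^\ast$ with decorations $\ast f_{(m-k)}$. For generic $(F,G)$ there is a basis $f_1,\dots,f_m$ with $f_k\in F_k\cap G_{m+1-k}$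 and $f_{(k)}=f_1\wedge\cdots\wedge f_k$; for generic $(G,H)$ a basis $h_1,\dots,h_m$ with $h_k\in G_{m+1-k}\cap H_k$ and $h_{(k)}=h_k\wedge\cdots\wedge h_1$. Put $f_{s,(k)}=f_{s+1}\wedge\cdots\wedge f_{s+k}$, $h_{(k),s}=h_{s+k}\wedge\cdots\wedge h_{s+1}$, and for $a'+b'+c'=m-s$ define $\Delta^s_{a',b',c'}:=\langle f_{s,(a')}\wedge g_{(b')}\wedge h_{(c'),s},\omega_s\rangle$ where $\omega_s$ is the volume form on $G_{m-s}$ with $\langle g_{(m-s)},\omega_s\rangle=\langle f_{(s)}\wedge g_{(m-s)},\omega\rangle\langle g_{(m-s)}\wedge h_{(s)},\omega\rangle$. *)

theory Defs
  imports "Jordan_Normal_Form.Determinant"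
begin

text \<open>Conventions. V = Q^m, vectors are rat vec of dimension m; a covector phi
acts on v by the dot product, so V^* is also represented by rat vec of dimension m.
The volume form omega on V is given by a nonzero scalar cw:
<v_1 ^ ... ^ v_m, omega> = cw * det[v_1 ... v_m].
A decomposable k-vector v_1 ^ ... ^ v_k is represented by the list [v_1,...,v_k];
k-forms on V (elements of wedge^k V^*) are represented as alternating k-linear
functionals (rat vec list => rat), identified via <v_1^...^v_k, psi> = psi [v_1..v_k].\<close>

definition vecs_in :: "nat \<Rightarrow> rat vec list \<Rightarrow> bool" where
  "vecs_in m vs \<longleftrightarrow> set vs \<subseteq> carrier_vec m"

text \<open>Pairing <u_1^...^u_k, phi_1^...^phi_k> = det(<u_i,phi_j>).\<close>
definition pair_wedge :: "rat vec list \<Rightarrow> rat vec list \<Rightarrow> rat" where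
  "pair_wedge us phis = det (mat (length us) (length us) (\<lambda>(i,j). us ! i \<bullet> phis ! j))"

text \<open>Equality of decomposable k-vectors in wedge^k V (tested against all of wedge^k V^*).\<close>
definition wedge_eq :: "nat \<Rightarrow> rat vec list \<Rightarrow> rat vec list \<Rightarrow> bool" where
  "wedge_eq m us vs \<longleftrightarrow> length us = length vs \<and>
     (\<forall>phis. length phis = length us \<and> vecs_in m phis \<longrightarrow> pair_wedge us phis = pair_wedge vs phis)"

text \<open>Nonzero k-vector.\<close>
definition wedge_nonzero :: "nat \<Rightarrow> rat vec list \<Rightarrow> bool" where
  "wedge_nonzero m us \<longleftrightarrow> (\<exists>phis. length phis = length us \<and> vecs_in m phis \<and> pair_wedge us phis \<noteq> 0)"

text \<open>Linear span membership.\<close>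
definition in_span :: "nat \<Rightarrow> rat vec list \<Rightarrow> rat vec \<Rightarrow> bool" where
  "in_span m vs v \<longleftrightarrow> v \<in> carrier_vec m \<and> (\<exists>x \<in> carrier_vec (length vs). v = mat_of_cols m vs *\<^sub>v x)"

text \<open><v_1 ^ ... ^ v_m, omega>.\<close>
definition volV :: "nat \<Rightarrow> rat \<Rightarrow> rat vec list \<Rightarrow> rat" where
  "volV m cw vs = cw * det (mat_of_cols m vs)"

text \<open>A decorated flag: D i represents the decoration f_(i) in wedge^i F_i, where
F_i = span (D i) is i-dimensional (f_(i) nonzero), F_i subset F_(i+1),
f_(0) = 1 (empty wedge), and <f_(m), omega> = 1.\<close>
definition dflag :: "nat \<Rightarrow> rat \<Rightarrow> (nat \<Rightarrow> rat vec list) \<Rightarrow> bool" where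
  "dflag m cw D \<longleftrightarrow>
     (\<forall>i\<le>m. length (D i) = i \<and> vecs_in m (D i) \<and> wedge_nonzero m (D i)) \<and>
     (\<forall>i<m. \<forall>v\<in>set (D i). in_span m (D (Suc i)) v) \<and>
     volV m cw (D m) = 1"

text \<open>Generic triple: F_a + G_b + H_c = V (direct) for all a+b+c=m, i.e.
<f_(a) ^ g_(b) ^ h_(c), omega> is nonzero. (This contains genericity of the pairs.)\<close>
definition generic_triple :: "nat \<Rightarrow> rat \<Rightarrow> (nat \<Rightarrow> rat vec list) \<Rightarrow> (nat \<Rightarrow> rat vec list)
    \<Rightarrow> (nat \<Rightarrow> rat vec list) \<Rightarrow> bool" where
  "generic_triple m cw F G H \<longleftrightarrow>
     (\<forall>a b c. a + b + c = m \<longrightarrow> volV m cw (F a @ G b @ H c) \<noteq> 0)"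

text \<open>The basis f_1..f_m (stored as fl ! (k-1) = f_k) attached to the pair (F,G):
f_k in F_k \<inter> G_(m+1-k) and f_(k) = f_1 ^ ... ^ f_k.\<close>
definition basis_FG :: "nat \<Rightarrow> (nat \<Rightarrow> rat vec list) \<Rightarrow> (nat \<Rightarrow> rat vec list) \<Rightarrow> rat vec list \<Rightarrow> bool" where
  "basis_FG m F G fl \<longleftrightarrow> length fl = m \<and> vecs_in m fl \<and>
     (\<forall>k\<in>{1..m}. in_span m (F k) (fl ! (k-1)) \<and> in_span m (G (m+1-k)) (fl ! (k-1)) \<and>
        wedge_eq m (take k fl) (F k))"

text \<open>The basis h_1..h_m (hl ! (k-1) = h_k) attached to the pair (G,H):
h_k in G_(m+1-k) \<inter> H_k and h_(k) = h_k ^ ... ^ h_1.\<close>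
definition basis_GH :: "nat \<Rightarrow> (nat \<Rightarrow> rat vec list) \<Rightarrow> (nat \<Rightarrow> rat vec list) \<Rightarrow> rat vec list \<Rightarrow> bool" where
  "basis_GH m G H hl \<longleftrightarrow> length hl = m \<and> vecs_in m hl \<and>
     (\<forall>k\<in>{1..m}. in_span m (G (m+1-k)) (hl ! (k-1)) \<and> in_span m (H k) (hl ! (k-1)) \<and>
        wedge_eq m (rev (take k hl)) (H k))"

text \<open>The volume form on the subspace W = span gs (gs a basis of W) taking value K on
the wedge of gs: evaluated on ws (vectors of W) it is K * det of the coordinate
matrix of ws with respect to gs.\<close>
definition vol_sub :: "nat \<Rightarrow> rat vec list \<Rightarrow> rat \<Rightarrow> rat vec list \<Rightarrow> rat" where
  "vol_sub m gs K ws = K * det (THE M. M \<in> carrier_mat (length gs) (length ws) \<and>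
      mat_of_cols m ws = mat_of_cols m gs * M)"

text \<open>Delta^s_{a',b',c'} = <f_{s,(a')} ^ g_(b') ^ h_{(c'),s}, omega_s>, with omega_s the volume
form on G_(m-s) with <g_(m-s), omega_s> = <f_(s)^g_(m-s),omega> <g_(m-s)^h_(s),omega>.\<close>
definition Delta_s :: "nat \<Rightarrow> rat \<Rightarrow> (nat \<Rightarrow> rat vec list) \<Rightarrow> (nat \<Rightarrow> rat vec list) \<Rightarrow> (nat \<Rightarrow> rat vec list)
    \<Rightarrow> rat vec list \<Rightarrow> rat vec list \<Rightarrow> nat \<Rightarrow> nat \<Rightarrow> nat \<Rightarrow> nat \<Rightarrow> rat" where
  "Delta_s m cw F G H fl hl s a' b' c' =
     vol_sub m (G (m - s)) (volV m cw (F s @ G (m - s)) * volV m cw (G (m - s) @ H s))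
       (take a' (drop s fl) @ G b' @ rev (take c' (drop s hl)))"

text \<open>Hodge-type isomorphism: for u in wedge^k V, *u in wedge^(m-k) V^* is the form
with <v, *u> = <u ^ v, omega>.\<close>
definition star :: "nat \<Rightarrow> rat \<Rightarrow> rat vec list \<Rightarrow> (rat vec list \<Rightarrow> rat)" where
  "star m cw us = (\<lambda>vs. volV m cw (us @ vs))"

text \<open>Wedge product of a p-form alpha and a q-form beta (convention making
phi_1 ^...^ phi_k evaluate to det(<v_i,phi_j>)): sum over (p,q)-shuffles.\<close>
definition wedgeF :: "nat \<Rightarrow> (rat vec list \<Rightarrow> rat) \<Rightarrow> (rat vec list \<Rightarrow> rat) \<Rightarrow> (rat vec list \<Rightarrow> rat)" where
  "wedgeF p alpha beta = (\<lambda>vs. \<Sum>S\<in>{S. S \<subseteq> {..<length vs} \<and> card S = p}.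
      (-1::rat) ^ (\<Sum>S - p * (p - 1) div 2) * alpha (nths vs S) * beta (nths vs (- S)))"

text \<open><omega^*, psi> for an m-form psi, where omega^* = (1/cw) e_1 ^ ... ^ e_m in wedge^m V
is the volume form on V^* with <omega^*, omega> = 1.\<close>
definition pair_omega_star :: "nat \<Rightarrow> rat \<Rightarrow> (rat vec list \<Rightarrow> rat) \<Rightarrow> rat" where
  "pair_omega_star m cw psi = psi (unit_vecs m) / cw"

text \<open>Delta^*_{a,b,c} = <omega^*, *f_(m-a) ^ *g_(m-b) ^ *h_(m-c)>.\<close>
definition Delta_dual :: "nat \<Rightarrow> rat \<Rightarrow> (nat \<Rightarrow> rat vec list) \<Rightarrow> (nat \<Rightarrow> rat vec list) \<Rightarrow> (nat \<Rightarrow> rat vec list)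
    \<Rightarrow> nat \<Rightarrow> nat \<Rightarrow> nat \<Rightarrow> rat" where
  "Delta_dual m cw F G H a b c = pair_omega_star m cw
     (wedgeF (a + b) (wedgeF a (star m cw (F (m - a))) (star m cw (G (m - b)))) (star m cw (H (m - c))))"

end

theory Submission
  imports Defs
begin


definition mlalt :: "nat \<Rightarrow> nat \<Rightarrow> (rat vec list \<Rightarrow> rat) \<Rightarrow> bool" where
"mlalt m n \<theta> \<longleftrightarrow>
  (\<forall>xs i u v. length xs = n \<longrightarrow> set xs \<subseteq> carrier_vec m \<longrightarrow> i < n \<longrightarrow> u \<in> carrier_vec m \<longrightarrow> v \<in> carrier_vec m \<longrightarrow>
     \<theta> (xs[i := u + v]) = \<theta> (xs[i := u]) + \<theta> (xs[i := v])) \<and>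
  (\<forall>xs i u c. length xs = n \<longrightarrow> set xs \<subseteq> carrier_vec m \<longrightarrow> i < n \<longrightarrow> u \<in> carrier_vec m \<longrightarrow>
     \<theta> (xs[i := c \<cdot>\<^sub>v u]) = c * \<theta> (xs[i := u])) \<and>
  (\<forall>xs i. length xs = n \<longrightarrow> set xs \<subseteq> carrier_vec m \<longrightarrow> Suc i < n \<longrightarrow> xs!i = xs!Suc i \<longrightarrow> \<theta> xs = 0)"

lemma mlalt_add: "mlalt m n \<theta> \<Longrightarrow> length xs = n \<Longrightarrow> set xs \<subseteq> carrier_vec m \<Longrightarrow> i < n \<Longrightarrow>
  u \<in> carrier_vec m \<Longrightarrow> v \<in> carrier_vec m \<Longrightarrow> \<theta> (xs[i := u + v]) = \<theta> (xs[i := u]) + \<theta> (xs[i := v])"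
  unfolding mlalt_def by blast

lemma mlalt_smult: "mlalt m n \<theta> \<Longrightarrow> length xs = n \<Longrightarrow> set xs \<subseteq> carrier_vec m \<Longrightarrow> i < n \<Longrightarrow>
  u \<in> carrier_vec m \<Longrightarrow> \<theta> (xs[i := c \<cdot>\<^sub>v u]) = c * \<theta> (xs[i := u])"
  unfolding mlalt_def by blast

lemma mlalt_adj: "mlalt m n \<theta> \<Longrightarrow> length xs = n \<Longrightarrow> set xs \<subseteq> carrier_vec m \<Longrightarrow> Suc i < n \<Longrightarrow>
  xs!i = xs!Suc i \<Longrightarrow> \<theta> xs = 0"
  unfolding mlalt_def by blast

lemma mlaltI:
  assumes "\<And>xs i u v. length xs = n \<Longrightarrow> set xs \<subseteq> carrier_vec m \<Longrightarrow> i < n \<Longrightarrow> u \<in> carrier_vec m \<Longrightarrow> v \<in> carrier_vec m \<Longrightarrow>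
     \<theta> (xs[i := u + v]) = \<theta> (xs[i := u]) + \<theta> (xs[i := v])"
  and "\<And>xs i u c. length xs = n \<Longrightarrow> set xs \<subseteq> carrier_vec m \<Longrightarrow> i < n \<Longrightarrow> u \<in> carrier_vec m \<Longrightarrow>
     \<theta> (xs[i := c \<cdot>\<^sub>v u]) = c * \<theta> (xs[i := u])"
  and "\<And>xs i. length xs = n \<Longrightarrow> set xs \<subseteq> carrier_vec m \<Longrightarrow> Suc i < n \<Longrightarrow> xs!i = xs!Suc i \<Longrightarrow> \<theta> xs = 0"
  shows "mlalt m n \<theta>"
  unfolding mlalt_def using assms by blast

lemma set_update_carrier: "set xs \<subseteq> carrier_vec m \<Longrightarrow> u \<in> carrier_vec m \<Longrightarrow> set (xs[i:=u]) \<subseteq> carrier_vec m"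
  by (meson dual_order.trans insert_subset set_update_subset_insert)

lemma nth_carrier: "set xs \<subseteq> carrier_vec m \<Longrightarrow> i < length xs \<Longrightarrow> xs ! i \<in> carrier_vec m"
  by auto

lemma mlalt_zero_slot: "mlalt m n \<theta> \<Longrightarrow> length xs = n \<Longrightarrow> set xs \<subseteq> carrier_vec m \<Longrightarrow> i < n \<Longrightarrow>
  \<theta> (xs[i := 0\<^sub>v m]) = 0"
proof -
  assume a: "mlalt m n \<theta>" "length xs = n" "set xs \<subseteq> carrier_vec m" "i < n"
  have "0\<^sub>v m = (0::rat) \<cdot>\<^sub>v (0\<^sub>v m)" by auto
  then have "\<theta> (xs[i := 0\<^sub>v m]) = 0 * \<theta> (xs[i := 0\<^sub>v m])"
    using mlalt_smult[OF a, of "0\<^sub>v m" 0] by (metis zero_carrier_vec)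
  then show ?thesis by simp
qed

text \<open>swap lemma from a vanishing property at positions i j\<close>
lemma mlalt_swap_gen:
  assumes ml: "mlalt m n \<theta>" and len: "length xs = n" and car: "set xs \<subseteq> carrier_vec m"
    and ij: "i < n" "j < n" "i \<noteq> j"
    and Z: "\<And>ys. length ys = n \<Longrightarrow> set ys \<subseteq> carrier_vec m \<Longrightarrow> ys!i = ys!j \<Longrightarrow> \<theta> ys = 0"
  shows "\<theta> (xs[i := xs!j, j := xs!i]) = - \<theta> xs"
proof -
  define a where "a = xs!i"
  define b where "b = xs!j"
  have ac: "a \<in> carrier_vec m" "b \<in> carrier_vec m" using car ij len unfolding a_def b_def by auto
  have C: "\<And>(p::rat vec) q. p \<in> carrier_vec m \<Longrightarrow> q \<in> carrier_vec m \<Longrightarrow> set (xs[i:=p, j:=q]) \<subseteq> carrier_vec m"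
    by (simp add: car set_update_carrier)
  have L: "\<And>(p::rat vec) q. length (xs[i:=p, j:=q]) = n" using len by simp
  have E1: "\<And>(p::rat vec) q r. xs[i:=p, j:=q, i:=r] = xs[i:=r, j:=q]" using ij by (simp add: list_update_swap)
  have lin_i: "\<And>(p::rat vec) q r. p \<in> carrier_vec m \<Longrightarrow> q \<in> carrier_vec m \<Longrightarrow> r \<in> carrier_vec m \<Longrightarrow>
     \<theta> (xs[i:=p+q, j:=r]) = \<theta> (xs[i:=p, j:=r]) + \<theta> (xs[i:=q, j:=r])"
  proof -
    fix p q r :: "rat vec" assume pqr: "p \<in> carrier_vec m" "q \<in> carrier_vec m" "r \<in> carrier_vec m"
    have "\<theta> ((xs[i:=p, j:=r])[i:=p+q]) = \<theta> ((xs[i:=p, j:=r])[i:=p]) + \<theta> ((xs[i:=p, j:=r])[i:=q])"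
      by (rule mlalt_add[OF ml L C[OF pqr(1,3)] ij(1) pqr(1,2)])
    then show "\<theta> (xs[i:=p+q, j:=r]) = \<theta> (xs[i:=p, j:=r]) + \<theta> (xs[i:=q, j:=r])" unfolding E1 .
  qed
  have lin_j: "\<And>(p::rat vec) q r. p \<in> carrier_vec m \<Longrightarrow> q \<in> carrier_vec m \<Longrightarrow> r \<in> carrier_vec m \<Longrightarrow>
     \<theta> (xs[i:=r, j:=p+q]) = \<theta> (xs[i:=r, j:=p]) + \<theta> (xs[i:=r, j:=q])"
  proof -
    fix p q r :: "rat vec" assume pqr: "p \<in> carrier_vec m" "q \<in> carrier_vec m" "r \<in> carrier_vec m"
    have "\<theta> ((xs[i:=r, j:=p])[j:=p+q]) = \<theta> ((xs[i:=r, j:=p])[j:=p]) + \<theta> ((xs[i:=r, j:=p])[j:=q])"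
      by (rule mlalt_add[OF ml L C[OF pqr(3,1)] ij(2) pqr(1,2)])
    then show "\<theta> (xs[i:=r, j:=p+q]) = \<theta> (xs[i:=r, j:=p]) + \<theta> (xs[i:=r, j:=q])" by simp
  qed
  have z: "\<And>(p::rat vec). p \<in> carrier_vec m \<Longrightarrow> \<theta> (xs[i:=p, j:=p]) = 0"
    by (rule Z[OF L C], insert len ij, auto simp: nth_list_update)
  have "0 = \<theta> (xs[i:=a+b, j:=a+b])" using z ac by auto
  also have "\<dots> = \<theta> (xs[i:=a, j:=a+b]) + \<theta> (xs[i:=b, j:=a+b])" using lin_i ac by auto
  also have "\<dots> = (\<theta> (xs[i:=a, j:=a]) + \<theta> (xs[i:=a, j:=b])) + (\<theta> (xs[i:=b, j:=a]) + \<theta> (xs[i:=b, j:=b]))"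
    using lin_j ac by auto
  also have "\<dots> = \<theta> (xs[i:=a, j:=b]) + \<theta> (xs[i:=b, j:=a])" using z ac by simp
  also have "xs[i:=a, j:=b] = xs" unfolding a_def b_def by simp
  finally show ?thesis unfolding a_def b_def by (simp add: eq_neg_iff_add_eq_0 add.commute)
qed

lemma mlalt_eq_zero:
  assumes ml: "mlalt m n \<theta>"
  shows "length xs = n \<Longrightarrow> set xs \<subseteq> carrier_vec m \<Longrightarrow> i < j \<Longrightarrow> j < n \<Longrightarrow> xs!i = xs!j \<Longrightarrow> \<theta> xs = 0"
proof (induction "j - i" arbitrary: xs j)
  case 0
  then show ?case by simp
next
  case (Suc d)
  show ?case
  proof (cases "j = Suc i")
    case True
    then show ?thesis using mlalt_adj[OF ml] Suc.prems by auto
  next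
    case False
    then have ij: "Suc i < j" using Suc by auto
    obtain j' where j': "j = Suc j'" using ij by (cases j) auto
    define ys where "ys = xs[j' := xs!j, j := xs!j']"
    have "\<theta> ys = - \<theta> xs" unfolding ys_def
      by (rule mlalt_swap_gen[OF ml Suc.prems(1,2)], insert Suc.prems j' ml, auto intro: mlalt_adj)
    moreover have "\<theta> ys = 0"
    proof (rule Suc.hyps(1)[of j'])
      show "d = j' - i" using Suc.hyps(2) j' by simp
      show "length ys = n" using Suc.prems unfolding ys_def by simp
      show "set ys \<subseteq> carrier_vec m" unfolding ys_def using Suc.prems j'
        by (intro set_update_carrier) auto
      show "i < j'" "j' < n" using ij j' Suc.prems by auto
      show "ys ! i = ys ! j'" unfolding ys_def using ij j' Suc.prems by auto
    qed
    ultimately show ?thesis by simp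
  qed
qed

lemma mlalt_eq_zero': "mlalt m n \<theta> \<Longrightarrow> length xs = n \<Longrightarrow> set xs \<subseteq> carrier_vec m \<Longrightarrow> i \<noteq> j \<Longrightarrow> i < n \<Longrightarrow> j < n
  \<Longrightarrow> xs!i = xs!j \<Longrightarrow> \<theta> xs = 0"
  by (metis linorder_neqE_nat mlalt_eq_zero)

lemma mlalt_swap: "mlalt m n \<theta> \<Longrightarrow> length xs = n \<Longrightarrow> set xs \<subseteq> carrier_vec m \<Longrightarrow> i \<noteq> j \<Longrightarrow> i < n \<Longrightarrow> j < n
  \<Longrightarrow> \<theta> (xs[i := xs!j, j := xs!i]) = - \<theta> xs"
  by (rule mlalt_swap_gen, auto intro: mlalt_eq_zero')



definition lc :: "nat \<Rightarrow> (nat \<Rightarrow> rat) \<Rightarrow> (nat \<Rightarrow> rat vec) \<Rightarrow> nat set \<Rightarrow> rat vec" where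
  "lc m c f J = vec m (\<lambda>r. \<Sum>j\<in>J. c j * f j $ r)"

lemma lc_carrier[simp]: "lc m c f J \<in> carrier_vec m" unfolding lc_def by simp

lemma lc_empty: "lc m c f {} = 0\<^sub>v m" unfolding lc_def by auto

lemma lc_insert: "finite J \<Longrightarrow> j \<notin> J \<Longrightarrow> f j \<in> carrier_vec m \<Longrightarrow>
  lc m c f (insert j J) = c j \<cdot>\<^sub>v f j + lc m c f J"
  unfolding lc_def by (rule eq_vecI, auto)

lemma mlalt_lc:
  assumes ml: "mlalt m n \<theta>" and len: "length xs = n" and car: "set xs \<subseteq> carrier_vec m" and i: "i < n"
    and fin: "finite J" and f: "\<And>j. j \<in> J \<Longrightarrow> f j \<in> carrier_vec m"
  shows "\<theta> (xs[i := lc m c f J]) = (\<Sum>j\<in>J. c j * \<theta> (xs[i := f j]))"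
  using fin f
proof (induction J rule: finite_induct)
  case empty
  then show ?case using mlalt_zero_slot[OF ml len car i] by (simp add: lc_empty)
next
  case (insert j J)
  have "\<theta> (xs[i := lc m c f (insert j J)]) = \<theta> (xs[i := c j \<cdot>\<^sub>v f j + lc m c f J])"
    using insert by (simp add: lc_insert)
  also have "\<dots> = \<theta> (xs[i := c j \<cdot>\<^sub>v f j]) + \<theta> (xs[i := lc m c f J])"
    by (rule mlalt_add[OF ml len car i], insert insert, auto)
  also have "\<theta> (xs[i := c j \<cdot>\<^sub>v f j]) = c j * \<theta> (xs[i := f j])"
    by (rule mlalt_smult[OF ml len car i], insert insert, auto)
  finally show ?case using insert by simp
qed

lemma unit_expand: "v \<in> carrier_vec m \<Longrightarrow> lc m (\<lambda>j. v $ j) (unit_vec m) {..<m} = v"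
proof (rule eq_vecI)
  fix r assume v: "v \<in> carrier_vec m" and r: "r < dim_vec v"
  have "(\<Sum>j\<in>{..<m}. v $ j * unit_vec m j $ r) = (\<Sum>j\<in>{..<m}. if j = r then v $ j else 0)"
    using r v by (intro sum.cong, auto)
  also have "\<dots> = v $ r" using r v by auto
  finally show "lc m (\<lambda>j. v $ j) (unit_vec m) {..<m} $ r = v $ r" unfolding lc_def using r v by auto
qed (auto simp: lc_def)

lemma mlalt_det: "mlalt k k (\<lambda>zs. det (mat_of_cols k zs))"
proof (rule mlaltI)
  fix xs :: "rat vec list" and i
  assume len: "length xs = k" and car: "set xs \<subseteq> carrier_vec k" and i: "i < k"
  have del: "\<And>u w r. mat_delete (mat_of_cols k (xs[i:=u])) r i = mat_delete (mat_of_cols k (xs[i:=w])) r i"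
    unfolding mat_delete_def by (rule eq_matI, insert len, auto simp: mat_of_cols_index nth_list_update)
  have cof: "\<And>u w r. cofactor (mat_of_cols k (xs[i:=u])) r i = cofactor (mat_of_cols k (xs[i:=w])) r i"
    unfolding cofactor_def by (metis del)
  have lap: "\<And>u. u \<in> carrier_vec k \<Longrightarrow> det (mat_of_cols k (xs[i:=u])) = (\<Sum>r<k. u $ r * cofactor (mat_of_cols k (xs[i:=xs!i])) r i)"
  proof -
    fix u :: "rat vec" assume u: "u \<in> carrier_vec k"
    have "det (mat_of_cols k (xs[i:=u])) = (\<Sum>r<k. mat_of_cols k (xs[i:=u]) $$ (r,i) * cofactor (mat_of_cols k (xs[i:=u])) r i)"
      by (rule laplace_expansion_column, insert len i, auto)
    also have "\<dots> = (\<Sum>r<k. u $ r * cofactor (mat_of_cols k (xs[i:=xs!i])) r i)"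
      by (intro sum.cong refl, subst cof[of _ _ "xs!i"], insert len i, auto simp: mat_of_cols_index)
    finally show "det (mat_of_cols k (xs[i:=u])) = (\<Sum>r<k. u $ r * cofactor (mat_of_cols k (xs[i:=xs!i])) r i)" .
  qed
  {
    fix u v :: "rat vec" assume u: "u \<in> carrier_vec k" and v: "v \<in> carrier_vec k"
    show "det (mat_of_cols k (xs[i := u + v])) = det (mat_of_cols k (xs[i := u])) + det (mat_of_cols k (xs[i := v]))"
      unfolding lap[OF u] lap[OF v] lap[OF add_carrier_vec[OF u v]]
      by (subst sum.distrib[symmetric], rule sum.cong, insert u v, auto simp: algebra_simps)
  }
  {
    fix u :: "rat vec" and c assume u: "u \<in> carrier_vec k"
    show "det (mat_of_cols k (xs[i := c \<cdot>\<^sub>v u])) = c * det (mat_of_cols k (xs[i := u]))"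
      unfolding lap[OF u] lap[OF smult_carrier_vec[THEN iffD2, OF u]]
      by (subst sum_distrib_left, rule sum.cong, insert u, auto simp: algebra_simps)
  }
next
  fix xs :: "rat vec list" and i
  assume len: "length xs = k" and car: "set xs \<subseteq> carrier_vec k" and i: "Suc i < k" and eq: "xs ! i = xs ! Suc i"
  have c1: "col (mat_of_cols k xs) i = xs ! i" by (rule col_mat_of_cols, insert len car i, auto)
  have c2: "col (mat_of_cols k xs) (Suc i) = xs ! Suc i" by (rule col_mat_of_cols, insert len car i, auto)
  show "det (mat_of_cols k xs) = 0"
    by (rule det_identical_columns[of _ k i "Suc i"], insert len i eq c1 c2, auto)
qed

definition linmap :: "nat \<Rightarrow> nat \<Rightarrow> (rat vec \<Rightarrow> rat vec) \<Rightarrow> bool" where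
  "linmap m k g \<longleftrightarrow> (\<forall>u\<in>carrier_vec m. g u \<in> carrier_vec k) \<and>
     (\<forall>u\<in>carrier_vec m. \<forall>v\<in>carrier_vec m. g (u + v) = g u + g v) \<and>
     (\<forall>c. \<forall>u\<in>carrier_vec m. g (c \<cdot>\<^sub>v u) = c \<cdot>\<^sub>v g u)"

lemma linmap_id: "linmap m m (\<lambda>x. x)" unfolding linmap_def by auto

lemma linmap_mult: "A \<in> carrier_mat k m \<Longrightarrow> linmap m k (\<lambda>x. A *\<^sub>v x)"
  unfolding linmap_def by (auto simp: mult_add_distrib_mat_vec mult_mat_vec)

lemma mlalt_transfer:
  assumes ml: "mlalt k n \<theta>" and g: "linmap m k g" and pre: "set pre \<subseteq> carrier_vec k"
    and post: "set post \<subseteq> carrier_vec k" and n: "n = length pre + n' + length post"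
  shows "mlalt m n' (\<lambda>xs. \<theta> (pre @ map g xs @ post))"
proof -
  have gc: "\<And>u. u \<in> carrier_vec m \<Longrightarrow> g u \<in> carrier_vec k" using g unfolding linmap_def by auto
  have upd: "\<And>(xs::rat vec list) i (u::rat vec). length xs = n' \<Longrightarrow> i < n' \<Longrightarrow>
     pre @ map g (xs[i:=u]) @ post = (pre @ map g xs @ post)[length pre + i := g u]"
    by (simp add: map_update list_update_append)
  have L: "\<And>xs. length xs = n' \<Longrightarrow> length (pre @ map g xs @ post) = n" using n by simp
  have C: "\<And>xs. set xs \<subseteq> carrier_vec m \<Longrightarrow> set (pre @ map g xs @ post) \<subseteq> carrier_vec k"
    using pre post gc by auto
  show ?thesis
  proof (rule mlaltI)
    fix xs :: "rat vec list" and i and u v :: "rat vec"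
    assume a: "length xs = n'" "set xs \<subseteq> carrier_vec m" "i < n'" "u \<in> carrier_vec m" "v \<in> carrier_vec m"
    have e: "g (u + v) = g u + g v" using g a unfolding linmap_def by auto
    show "\<theta> (pre @ map g (xs[i := u + v]) @ post) = \<theta> (pre @ map g (xs[i := u]) @ post) + \<theta> (pre @ map g (xs[i := v]) @ post)"
      unfolding upd[OF a(1,3)] e by (intro mlalt_add[OF ml L C], insert a n gc, auto)
  next
    fix xs :: "rat vec list" and i and u :: "rat vec" and c
    assume a: "length xs = n'" "set xs \<subseteq> carrier_vec m" "i < n'" "u \<in> carrier_vec m"
    have e: "g (c \<cdot>\<^sub>v u) = c \<cdot>\<^sub>v g u" using g a unfolding linmap_def by auto
    show "\<theta> (pre @ map g (xs[i := c \<cdot>\<^sub>v u]) @ post) = c * \<theta> (pre @ map g (xs[i := u]) @ post)"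
      unfolding upd[OF a(1,3)] e by (intro mlalt_smult[OF ml L C], insert a n gc, auto)
  next
    fix xs :: "rat vec list" and i
    assume a: "length xs = n'" "set xs \<subseteq> carrier_vec m" "Suc i < n'" "xs ! i = xs ! Suc i"
    show "\<theta> (pre @ map g xs @ post) = 0"
      by (rule mlalt_adj[OF ml L[OF a(1)] C[OF a(2)], of "length pre + i"], insert a n,
          auto simp: nth_append)
  qed
qed

lemma mlalt_scale: "mlalt m n \<theta> \<Longrightarrow> mlalt m n (\<lambda>xs. c * \<theta> xs)"
  unfolding mlalt_def by (simp add: algebra_simps)

lemma mlalt_diff: "mlalt m n \<theta>1 \<Longrightarrow> mlalt m n \<theta>2 \<Longrightarrow> mlalt m n (\<lambda>xs. \<theta>1 xs - \<theta>2 xs)"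
  unfolding mlalt_def by (simp add: algebra_simps)

lemma mat_of_cols_unit_vecs: "mat_of_cols m (unit_vecs m) = 1\<^sub>m m"
  by (rule eq_matI, auto simp: unit_vecs_def mat_of_cols_index)

lemma det_unit_vecs: "det (mat_of_cols m (unit_vecs m)) = 1"
  by (simp add: mat_of_cols_unit_vecs)

lemma mlalt_zero_on_perms:
  assumes ml: "mlalt m m \<delta>" and d0: "\<delta> (unit_vecs m) = 0"
  shows "d \<le> m \<Longrightarrow> inj_on g {..<m} \<Longrightarrow> g ` {..<m} \<subseteq> {..<m} \<Longrightarrow> (\<forall>i. i + d < m \<longrightarrow> g i = i) \<Longrightarrow>
     \<delta> (map (\<lambda>i. unit_vec m (g i)) [0..<m]) = 0"
proof (induction d arbitrary: g)
  case 0
  then have "map (\<lambda>i. unit_vec m (g i)) [0..<m] = (unit_vecs m :: rat vec list)" unfolding unit_vecs_def by auto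
  then show ?case using d0 by simp
next
  case (Suc d)
  define k where "k = m - Suc d"
  have km: "k < m" "k + Suc d = m" using Suc.prems unfolding k_def by auto
  have fixk: "\<And>i. i < k \<Longrightarrow> g i = i" using Suc.prems km by auto
  show ?case
  proof (cases "g k = k")
    case True
    show ?thesis
    proof (rule Suc.IH)
      show "\<forall>i. i + d < m \<longrightarrow> g i = i"
      proof (intro allI impI)
        fix i assume "i + d < m"
        then have "i < k \<or> i = k" using km by auto
        then show "g i = i" using True fixk by auto
      qed
    qed (insert Suc.prems, auto)
  next
    case False
    have surj: "g ` {..<m} = {..<m}"
      by (rule endo_inj_surj, insert Suc.prems, auto)
    then obtain j where j: "j < m" "g j = k" using km by (metis imageE lessThan_iff)
    have jk: "j \<noteq> k" using j False by auto
    have kj: "k < j" proof (rule ccontr)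
      assume "\<not> k < j" then have "j < k" using jk by auto
      then show False using fixk[of j] j jk by auto
    qed
    define g' where "g' = (\<lambda>i. if i = k then g j else if i = j then g k else g i)"
    have inj': "inj_on g' {..<m}"
      using Suc.prems(2) j km jk unfolding g'_def inj_on_def by (metis lessThan_iff)
    have into': "g' ` {..<m} \<subseteq> {..<m}" using Suc.prems(3) j km unfolding g'_def by auto
    have fix': "\<forall>i. i + d < m \<longrightarrow> g' i = i"
    proof (intro allI impI)
      fix i assume "i + d < m"
      then have "i < k \<or> i = k" using km by auto
      then show "g' i = i" using fixk kj j unfolding g'_def by auto
    qed
    have z: "\<delta> (map (\<lambda>i. unit_vec m (g' i)) [0..<m]) = 0"
      by (rule Suc.IH, insert Suc.prems inj' into' fix', auto)
    define xs :: "rat vec list" where "xs = map (\<lambda>i. unit_vec m (g' i)) [0..<m]"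
    have eq: "map (\<lambda>i. unit_vec m (g i)) [0..<m] = xs[k := xs!j, j := xs!k]"
      unfolding xs_def g'_def by (rule nth_equalityI, insert j km jk, auto simp: nth_list_update)
    have "\<delta> (xs[k := xs!j, j := xs!k]) = - \<delta> xs"
      by (rule mlalt_swap[OF ml], insert j km jk, auto simp: xs_def)
    then show ?thesis unfolding eq using z xs_def by simp
  qed
qed

lemma mlalt_det_char:
  assumes ml: "mlalt m m \<phi>" and len: "length vs = m" and car: "set vs \<subseteq> carrier_vec m"
  shows "\<phi> vs = det (mat_of_cols m vs) * \<phi> (unit_vecs m)"
proof -
  define \<delta> where "\<delta> = (\<lambda>xs. \<phi> xs - det (mat_of_cols m xs) * \<phi> (unit_vecs m))"
  have mld: "mlalt m m \<delta>" unfolding \<delta>_def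
    by (rule mlalt_diff[OF ml], subst mult.commute, rule mlalt_scale[OF mlalt_det])
  have d0: "\<delta> (unit_vecs m) = 0" unfolding \<delta>_def by (simp add: det_unit_vecs)
  have ucar: "\<And>j. unit_vec m j \<in> carrier_vec m" by simp
  have P0: "\<And>xs. length xs = m \<Longrightarrow> (\<forall>i<m. \<exists>j<m. xs!i = unit_vec m j) \<Longrightarrow> \<delta> xs = 0"
  proof -
    fix xs :: "rat vec list" assume len: "length xs = m" and u: "\<forall>i<m. \<exists>j<m. xs!i = unit_vec m j"
    then obtain g where g: "\<And>i. i < m \<Longrightarrow> g i < m \<and> xs!i = unit_vec m (g i)" by metis
    have car: "set xs \<subseteq> carrier_vec m" using g len by (auto simp: in_set_conv_nth)
    have xs: "xs = map (\<lambda>i. unit_vec m (g i)) [0..<m]" by (rule nth_equalityI, insert g len, auto)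
    show "\<delta> xs = 0"
    proof (cases "inj_on g {..<m}")
      case True
      show ?thesis unfolding xs by (rule mlalt_zero_on_perms[OF mld d0 le_refl True], insert g, auto)
    next
      case False
      then obtain i j where ij: "i < m" "j < m" "i \<noteq> j" "g i = g j" unfolding inj_on_def by auto
      show ?thesis by (rule mlalt_eq_zero'[OF mld len car ij(3,1,2)], insert g ij, auto)
    qed
  qed
  have Pk: "\<And>xs. k \<le> m \<Longrightarrow> length xs = m \<Longrightarrow> set xs \<subseteq> carrier_vec m \<Longrightarrow> (\<forall>i. k \<le> i \<and> i < m \<longrightarrow> (\<exists>j<m. xs!i = unit_vec m j)) \<Longrightarrow> \<delta> xs = 0" for k
  proof (induction k)
    case 0
    then show ?case using P0 by auto
  next
    case (Suc k)
    have km: "k < m" using Suc by auto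
    have xk: "xs!k \<in> carrier_vec m" using Suc.prems km by auto
    have "\<delta> xs = \<delta> (xs[k := lc m (\<lambda>j. xs!k $ j) (unit_vec m) {..<m}])"
      using unit_expand[OF xk] by simp
    also have "\<dots> = (\<Sum>j\<in>{..<m}. xs!k $ j * \<delta> (xs[k := unit_vec m j]))"
      by (rule mlalt_lc[OF mld], insert Suc.prems km, auto)
    also have "\<dots> = 0"
    proof (rule sum.neutral, rule ballI)
      fix j assume j: "j \<in> {..<m}"
      have "\<delta> (xs[k := unit_vec m j]) = 0"
      proof (rule Suc.IH)
        show "set (xs[k := unit_vec m j]) \<subseteq> carrier_vec m" using Suc.prems by (intro set_update_carrier, auto)
        show "\<forall>i. k \<le> i \<and> i < m \<longrightarrow> (\<exists>ja<m. xs[k := unit_vec m j] ! i = unit_vec m ja)"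
          using Suc.prems j by (auto simp: nth_list_update)
      qed (insert Suc.prems, auto)
      then show "xs!k $ j * \<delta> (xs[k := unit_vec m j]) = 0" by simp
    qed
    finally show ?case .
  qed
  have "\<delta> vs = 0" by (rule Pk[of m], insert len car, auto)
  then show ?thesis unfolding \<delta>_def by simp
qed



lemma mult_unit_vec_col: "(A :: rat mat) \<in> carrier_mat n k \<Longrightarrow> j < k \<Longrightarrow> A *\<^sub>v unit_vec k j = col A j"
proof -
  assume A: "A \<in> carrier_mat n k" and j: "j < k"
  show ?thesis
  proof (rule eq_vecI)
    fix i assume "i < dim_vec (col A j)"
    then have i: "i < n" using A by auto
    have "(A *\<^sub>v unit_vec k j) $ i = row A i \<bullet> unit_vec k j" using i A by auto
    also have "\<dots> = row A i $ j" using scalar_prod_right_unit[OF j, of "row A i"] by simp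
    also have "\<dots> = A $$ (i, j)" using A i j by auto
    finally show "(A *\<^sub>v unit_vec k j) $ i = col A j $ i" using A i j by auto
  qed (insert A, auto)
qed

lemma mat_of_cols_mult_unit: "set (us :: rat vec list) \<subseteq> carrier_vec m \<Longrightarrow> j < length us \<Longrightarrow>
  mat_of_cols m us *\<^sub>v unit_vec (length us) j = us ! j"
proof -
  assume a: "set us \<subseteq> carrier_vec m" "j < length us"
  have "mat_of_cols m us *\<^sub>v unit_vec (length us) j = col (mat_of_cols m us) j"
    by (rule mult_unit_vec_col[of _ m], insert a, auto)
  also have "\<dots> = us ! j" by (rule col_mat_of_cols, insert a, auto)
  finally show ?thesis .
qed

lemma mlalt_cong: "mlalt m n \<theta>1 \<Longrightarrow> (\<And>xs. length xs = n \<Longrightarrow> set xs \<subseteq> carrier_vec m \<Longrightarrow> \<theta>1 xs = \<theta>2 xs) \<Longrightarrow> mlalt m n \<theta>2"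
proof -
  assume ml: "mlalt m n \<theta>1" and eq: "\<And>xs. length xs = n \<Longrightarrow> set xs \<subseteq> carrier_vec m \<Longrightarrow> \<theta>1 xs = \<theta>2 xs"
  have E: "\<And>xs i u. length xs = n \<Longrightarrow> set xs \<subseteq> carrier_vec m \<Longrightarrow> u \<in> carrier_vec m \<Longrightarrow> \<theta>2 (xs[i:=u]) = \<theta>1 (xs[i:=u])"
    by (rule eq[symmetric], auto, meson set_update_carrier subsetD)
  show ?thesis
  proof (rule mlaltI)
    fix xs :: "rat vec list" and i and u v :: "rat vec"
    assume a: "length xs = n" "set xs \<subseteq> carrier_vec m" "i < n" "u \<in> carrier_vec m" "v \<in> carrier_vec m"
    show "\<theta>2 (xs[i := u + v]) = \<theta>2 (xs[i := u]) + \<theta>2 (xs[i := v])"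
      using mlalt_add[OF ml a] E[OF a(1,2)] a by simp
  next
    fix xs :: "rat vec list" and i and u :: "rat vec" and c
    assume a: "length xs = n" "set xs \<subseteq> carrier_vec m" "i < n" "u \<in> carrier_vec m"
    show "\<theta>2 (xs[i := c \<cdot>\<^sub>v u]) = c * \<theta>2 (xs[i := u])"
      using mlalt_smult[OF ml a] E[OF a(1,2)] a by simp
  next
    fix xs :: "rat vec list" and i
    assume a: "length xs = n" "set xs \<subseteq> carrier_vec m" "Suc i < n" "xs ! i = xs ! Suc i"
    show "\<theta>2 xs = 0" using mlalt_adj[OF ml a] eq[OF a(1,2)] by simp
  qed
qed

lemma mlalt_lin_transform:
  assumes ml: "mlalt m k \<theta>" and us: "length us = k" "set us \<subseteq> carrier_vec m"
    and cs: "length cs = k" "set cs \<subseteq> carrier_vec k"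
  shows "\<theta> (map (\<lambda>c. mat_of_cols m us *\<^sub>v c) cs) = det (mat_of_cols k cs) * \<theta> us"
proof -
  let ?U = "mat_of_cols m us"
  have U: "?U \<in> carrier_mat m k" using us by auto
  have ml2: "mlalt k k (\<lambda>xs. \<theta> ([] @ map (\<lambda>c. ?U *\<^sub>v c) xs @ []))"
    by (rule mlalt_transfer[OF ml linmap_mult[OF U]], auto)
  have "\<theta> ([] @ map (\<lambda>c. ?U *\<^sub>v c) cs @ []) = det (mat_of_cols k cs) * \<theta> ([] @ map (\<lambda>c. ?U *\<^sub>v c) (unit_vecs k) @ [])"
    by (rule mlalt_det_char[OF ml2 cs])
  moreover have "map (\<lambda>c. ?U *\<^sub>v c) (unit_vecs k) = us"
    by (rule nth_equalityI, insert us, auto simp: unit_vecs_def mat_of_cols_mult_unit)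
  ultimately show ?thesis by simp
qed

lemma pair_wedge_as_det:
  assumes "length xs = k" "length phis = k" "set phis \<subseteq> carrier_vec m" "set xs \<subseteq> carrier_vec m"
  shows "pair_wedge xs phis = det (mat_of_cols k (map (\<lambda>x. vec k (\<lambda>j. x \<bullet> phis ! j)) xs))"
proof -
  have "mat k k (\<lambda>(i,j). xs ! i \<bullet> phis ! j) = transpose_mat (mat_of_cols k (map (\<lambda>x. vec k (\<lambda>j. x \<bullet> phis ! j)) xs))"
    by (rule eq_matI, insert assms, auto simp: mat_of_cols_index)
  then show ?thesis unfolding pair_wedge_def using assms
    by (metis det_transpose length_map mat_of_cols_carrier(1))
qed

lemma mlalt_pair_wedge:
  assumes phis: "length phis = k" "set phis \<subseteq> carrier_vec m"
  shows "mlalt m k (\<lambda>xs. pair_wedge xs phis)"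
proof -
  let ?g = "\<lambda>x. vec k (\<lambda>j. x \<bullet> phis ! j)"
  have g: "linmap m k ?g" unfolding linmap_def
  proof (intro conjI ballI allI)
    fix u v :: "rat vec" assume u: "u \<in> carrier_vec m" and v: "v \<in> carrier_vec m"
    show "?g (u + v) = ?g u + ?g v"
      by (rule eq_vecI, insert u v phis, auto intro!: add_scalar_prod_distrib[of _ m])
  next
    fix c :: rat and u :: "rat vec" assume u: "u \<in> carrier_vec m"
    show "?g (c \<cdot>\<^sub>v u) = c \<cdot>\<^sub>v ?g u"
      by (rule eq_vecI, insert u phis, auto intro!: smult_scalar_prod_distrib[of _ m])
  qed auto
  have "mlalt m k (\<lambda>xs. det (mat_of_cols k ([] @ map ?g xs @ [])))"
    by (rule mlalt_transfer[OF mlalt_det g], auto)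
  then show ?thesis
    by (rule mlalt_cong, insert phis, auto simp: pair_wedge_as_det)
qed

lemma mlalt_vol:
  assumes "set pre \<subseteq> carrier_vec m" "set post \<subseteq> carrier_vec m" "length pre + n + length post = m"
  shows "mlalt m n (\<lambda>xs. volV m cw (pre @ xs @ post))"
proof -
  have "mlalt m n (\<lambda>xs. det (mat_of_cols m (pre @ map (\<lambda>x. x) xs @ post)))"
    by (rule mlalt_transfer[OF mlalt_det linmap_id], insert assms, auto)
  then have "mlalt m n (\<lambda>xs. cw * det (mat_of_cols m (pre @ map (\<lambda>x. x) xs @ post)))"
    by (rule mlalt_scale)
  then show ?thesis unfolding volV_def by simp
qed

lemma wedge_eq_transfer:
  assumes we: "wedge_eq m vs us" and nz: "wedge_nonzero m us" and us: "length us = k" "vecs_in m us"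
    and sp: "\<And>v. v \<in> set vs \<Longrightarrow> in_span m us v" and ml: "mlalt m k \<theta>"
  shows "\<theta> vs = \<theta> us"
proof -
  have lvs: "length vs = k" using we us unfolding wedge_eq_def by auto
  have "\<forall>j<k. \<exists>x. x \<in> carrier_vec (length us) \<and> vs ! j = mat_of_cols m us *\<^sub>v x"
    using sp lvs unfolding in_span_def by (metis nth_mem)
  then obtain c where c: "\<And>j. j < k \<Longrightarrow> c j \<in> carrier_vec k \<and> vs ! j = mat_of_cols m us *\<^sub>v c j"
    using us by metis
  define cs where "cs = map c [0..<k]"
  have cs: "length cs = k" "set cs \<subseteq> carrier_vec k" unfolding cs_def using c by auto
  have vs: "vs = map (\<lambda>c. mat_of_cols m us *\<^sub>v c) cs"
    by (rule nth_equalityI, insert lvs c, auto simp: cs_def)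
  have usc: "set us \<subseteq> carrier_vec m" using us unfolding vecs_in_def by auto
  obtain phis where phis: "length phis = length us" "vecs_in m phis" "pair_wedge us phis \<noteq> 0"
    using nz unfolding wedge_nonzero_def by auto
  have phc: "set phis \<subseteq> carrier_vec m" using phis unfolding vecs_in_def by auto
  have "pair_wedge vs phis = det (mat_of_cols k cs) * pair_wedge us phis"
    unfolding vs by (rule mlalt_lin_transform[OF mlalt_pair_wedge[of phis k m] us(1) usc cs], insert phis phc us, auto)
  moreover have "pair_wedge vs phis = pair_wedge us phis" using we phis lvs us unfolding wedge_eq_def by auto
  ultimately have d: "det (mat_of_cols k cs) = 1" using phis by auto
  have "\<theta> vs = det (mat_of_cols k cs) * \<theta> us"
    unfolding vs by (rule mlalt_lin_transform[OF ml us(1) usc cs])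
  then show ?thesis using d by simp
qed

lemma in_span_member: "set us \<subseteq> carrier_vec m \<Longrightarrow> v \<in> set us \<Longrightarrow> in_span m us v"
  unfolding in_span_def
  by (metis in_set_conv_nth mat_of_cols_mult_unit subsetD unit_vec_carrier)

lemma in_span_trans:
  assumes v: "in_span m ws v" and ws: "\<And>w. w \<in> set ws \<Longrightarrow> in_span m us w" and us: "set us \<subseteq> carrier_vec m"
  shows "in_span m us v"
proof -
  obtain x where x: "x \<in> carrier_vec (length ws)" "v = mat_of_cols m ws *\<^sub>v x" "v \<in> carrier_vec m"
    using v unfolding in_span_def by auto
  have "\<forall>t<length ws. \<exists>y. y \<in> carrier_vec (length us) \<and> ws ! t = mat_of_cols m us *\<^sub>v y \<and> ws ! t \<in> carrier_vec m"
    using ws unfolding in_span_def by (metis nth_mem)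
  then obtain y where y: "\<And>t. t < length ws \<Longrightarrow> y t \<in> carrier_vec (length us) \<and> ws ! t = mat_of_cols m us *\<^sub>v y t \<and> ws ! t \<in> carrier_vec m"
    by metis
  define Y where "Y = mat_of_cols (length us) (map y [0..<length ws])"
  have Y: "Y \<in> carrier_mat (length us) (length ws)" unfolding Y_def by auto
  have W: "mat_of_cols m ws = mat_of_cols m us * Y"
  proof (rule eq_matI)
    fix i j assume i: "i < dim_row (mat_of_cols m us * Y)" and j: "j < dim_col (mat_of_cols m us * Y)"
    have j': "j < length ws" using j Y by auto
    have "col Y j = y j" unfolding Y_def using y[OF j'] j' by (subst col_mat_of_cols, auto)
    then have "(mat_of_cols m us * Y) $$ (i,j) = (mat_of_cols m us *\<^sub>v y j) $ i"
      using i j by auto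
    then show "mat_of_cols m ws $$ (i, j) = (mat_of_cols m us * Y) $$ (i, j)"
      using y[OF j'] i j' by (auto simp: mat_of_cols_index)
  qed (insert Y, auto)
  have "v = mat_of_cols m us *\<^sub>v (Y *\<^sub>v x)" unfolding x(2) W using Y x by (subst assoc_mult_mat_vec, auto)
  moreover have "Y *\<^sub>v x \<in> carrier_vec (length us)" using Y x by auto
  ultimately show ?thesis unfolding in_span_def using x by auto
qed

lemma dflag_chain:
  assumes D: "dflag m cw D" and ij: "i \<le> j" "j \<le> m" and v: "in_span m (D i) v"
  shows "in_span m (D j) v"
  using ij
proof (induction j)
  case 0
  then show ?case using v by auto
next
  case (Suc j)
  show ?case
  proof (cases "i = Suc j")
    case True
    then show ?thesis using v by simp
  next
    case False
    then have ih: "in_span m (D j) v" using Suc by auto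
    show ?thesis
    proof (rule in_span_trans[OF ih])
      show "\<And>w. w \<in> set (D j) \<Longrightarrow> in_span m (D (Suc j)) w" using D Suc.prems unfolding dflag_def by auto
      show "set (D (Suc j)) \<subseteq> carrier_vec m" using D Suc.prems unfolding dflag_def vecs_in_def by auto
    qed
  qed
qed

text \<open>padding\<close>
definition pad :: "nat \<Rightarrow> nat \<Rightarrow> rat vec \<Rightarrow> rat vec" where
  "pad n lp x = vec n (\<lambda>i. if lp \<le> i \<and> i < lp + dim_vec x then x $ (i - lp) else 0)"

lemma mat_of_cols_mult_vec_index: "r < m \<Longrightarrow> dim_vec x = length zs \<Longrightarrow>
   (mat_of_cols m zs *\<^sub>v x) $ r = (\<Sum>i<length zs. zs ! i $ r * x $ i)"
  unfolding mult_mat_vec_def scalar_prod_def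
  by (auto simp: mat_of_cols_index lessThan_atLeast0 intro!: sum.cong)

lemma pad_mult:
  fixes pre us post :: "rat vec list" and x :: "rat vec"
  assumes x: "x \<in> carrier_vec (length us)" and n: "n = length pre + length us + length post"
  shows "mat_of_cols m (pre @ us @ post) *\<^sub>v pad n (length pre) x = mat_of_cols m us *\<^sub>v x"
proof (rule eq_vecI)
  fix r assume "r < dim_vec (mat_of_cols m us *\<^sub>v x)"
  then have r: "r < m" by simp
  let ?f = "\<lambda>i. (pre @ us @ post) ! i $ r * pad n (length pre) x $ i"
  let ?lp = "length pre" and ?lu = "length us"
  have "(\<Sum>i<n. ?f i) = (\<Sum>i\<in>{0..<?lp + ?lu}. ?f i) + (\<Sum>i\<in>{?lp+?lu..<n}. ?f i)"
    using n by (simp add: lessThan_atLeast0 sum.atLeastLessThan_concat)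
  also have "(\<Sum>i\<in>{?lp+?lu..<n}. ?f i) = 0" using x n by (intro sum.neutral, auto simp: pad_def)
  also have "(\<Sum>i\<in>{0..<?lp + ?lu}. ?f i) = (\<Sum>i\<in>{0..<?lp}. ?f i) + (\<Sum>i\<in>{?lp..<?lp + ?lu}. ?f i)"
    by (simp add: sum.atLeastLessThan_concat)
  also have "(\<Sum>i\<in>{0..<?lp}. ?f i) = 0" using x n by (intro sum.neutral, auto simp: pad_def)
  also have "(\<Sum>i\<in>{?lp..<?lp + ?lu}. ?f i) = (\<Sum>i\<in>{0..<?lu}. ?f (i + ?lp))"
    using sum.shift_bounds_nat_ivl[of ?f 0 ?lp ?lu] by (simp add: add.commute)
  also have "\<dots> = (\<Sum>i<?lu. us ! i $ r * x $ i)"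
    using x n by (auto simp: pad_def nth_append lessThan_atLeast0 intro!: sum.cong)
  finally have S: "(\<Sum>i<n. ?f i) = (\<Sum>i<?lu. us ! i $ r * x $ i)" by simp
  have L: "(mat_of_cols m (pre @ us @ post) *\<^sub>v pad n (length pre) x) $ r = (\<Sum>i<length (pre @ us @ post). ?f i)"
    by (rule mat_of_cols_mult_vec_index[OF r], simp add: pad_def n)
  have R: "(mat_of_cols m us *\<^sub>v x) $ r = (\<Sum>i<?lu. us ! i $ r * x $ i)"
    by (rule mat_of_cols_mult_vec_index[OF r], insert x, simp)
  show "(mat_of_cols m (pre @ us @ post) *\<^sub>v pad n (length pre) x) $ r = (mat_of_cols m us *\<^sub>v x) $ r"
    unfolding L R using S n by (simp add: add.assoc)
qed simp

lemma pad_carrier[simp]: "pad n lp x \<in> carrier_vec n" unfolding pad_def by simp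

lemma pad_index: "lp \<le> i \<Longrightarrow> i < lp + dim_vec x \<Longrightarrow> i < n \<Longrightarrow> pad n lp x $ i = x $ (i - lp)"
  unfolding pad_def by simp

lemma kernel_pad:
  fixes pre us post :: "rat vec list" and x :: "rat vec"
  assumes d: "det (mat_of_cols m (pre @ us @ post)) \<noteq> 0" and len: "length (pre @ us @ post) = m"
    and car: "set (pre @ us @ post) \<subseteq> carrier_vec m"
    and x: "x \<in> carrier_vec (length us)" and z: "mat_of_cols m us *\<^sub>v x = 0\<^sub>v m"
  shows "x = 0\<^sub>v (length us)"
proof (rule ccontr)
  assume nz: "x \<noteq> 0\<^sub>v (length us)"
  have "\<exists>t<length us. x $ t \<noteq> 0"
  proof (rule ccontr)
    assume "\<not> (\<exists>t<length us. x $ t \<noteq> 0)"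
    then have "x = 0\<^sub>v (length us)" using x by (intro eq_vecI, auto)
    with nz show False by simp
  qed
  then obtain t where t: "t < length us" "x $ t \<noteq> 0" by auto
  let ?z = "pad m (length pre) x"
  have "?z $ (length pre + t) \<noteq> 0" using t x len by (subst pad_index, auto)
  then have "?z \<noteq> 0\<^sub>v m" using t len by auto
  moreover have "mat_of_cols m (pre @ us @ post) *\<^sub>v ?z = mat_of_cols m us *\<^sub>v x"
    by (rule pad_mult[OF x], insert len, simp)
  then have "mat_of_cols m (pre @ us @ post) *\<^sub>v ?z = 0\<^sub>v m" using z by simp
  ultimately have "det (mat_of_cols m (pre @ us @ post)) = 0"
    by (subst det_0_iff_vec_prod_zero_field[of _ m], insert len, auto intro!: exI[of _ ?z])
  with d show False by simp
qed

lemma det_zero_in_span_prefix: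
  fixes pre rest :: "rat vec list"
  assumes len: "length (pre @ rest) = m" and car: "set (pre @ rest) \<subseteq> carrier_vec m"
    and k: "k < length rest" and sp: "in_span m pre (rest ! k)"
  shows "det (mat_of_cols m (pre @ rest)) = 0"
proof -
  obtain y where y: "y \<in> carrier_vec (length pre)" "rest ! k = mat_of_cols m pre *\<^sub>v y"
    using sp unfolding in_span_def by auto
  let ?A = "mat_of_cols m (pre @ rest)"
  let ?z = "pad m 0 y - unit_vec m (length pre + k)"
  have A: "?A \<in> carrier_mat m m" using len by auto
  have "?A *\<^sub>v pad m 0 y = mat_of_cols m pre *\<^sub>v y"
    using pad_mult[where x=y and pre="[]" and us=pre and post=rest and n=m and m=m] len y by simp
  moreover have "?A *\<^sub>v unit_vec m (length pre + k) = rest ! k"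
    using mat_of_cols_mult_unit[of "pre @ rest" m "length pre + k"] len car k by (simp add: nth_append)
  ultimately have "?A *\<^sub>v ?z = 0\<^sub>v m" using A y
    by (subst mult_minus_distrib_mat_vec[OF A], auto)
  moreover have "?z $ (length pre + k) = - 1" using len k y
    by (simp add: pad_def)
  then have "?z \<noteq> 0\<^sub>v m" using len k by (metis index_zero_vec(1) length_append nat_add_left_cancel_less neg_equal_0_iff_equal one_neq_zero)
  moreover have "?z \<in> carrier_vec m" by simp
  ultimately show ?thesis by (subst det_0_iff_vec_prod_zero_field[OF A], blast)
qed



lemma card_less_Suc: "card {j\<in>S. j < Suc i} = (if (0::nat) \<in> S then 1 else 0) + card {j. Suc j \<in> S \<and> j < i}"
proof -
  have e: "{j\<in>S. j < Suc i} = (if 0 \<in> S then {0} else {}) \<union> Suc ` {j. Suc j \<in> S \<and> j < i}"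
    by (auto simp: image_iff less_Suc_eq_0_disj)
  have f: "finite {j. Suc j \<in> S \<and> j < i}" by auto
  show ?thesis unfolding e
    by (subst card_Un_disjoint, insert f, auto simp: card_image)
qed

lemma nths_update:
  "i < length xs \<Longrightarrow> nths (xs[i:=u]) S =
    (if i \<in> S then (nths xs S)[card {j\<in>S. j < i} := u] else nths xs S)"
proof (induction xs arbitrary: i S)
  case Nil
  then show ?case by simp
next
  case (Cons x l)
  show ?case
  proof (cases i)
    case 0
    then show ?thesis by (simp add: nths_Cons)
  next
    case (Suc i')
    have i': "i' < length l" using Cons.prems Suc by simp
    have IH: "nths (l[i':=u]) {j. Suc j \<in> S} = (if i' \<in> {j. Suc j \<in> S} then (nths l {j. Suc j \<in> S})[card {j\<in>{j. Suc j \<in> S}. j < i'} := u] else nths l {j. Suc j \<in> S})"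
      by (rule Cons.IH[OF i'])
    have c: "card {j\<in>S. j < Suc i'} = (if 0 \<in> S then 1 else 0) + card {j\<in>{j. Suc j \<in> S}. j < i'}"
      using card_less_Suc[of S i'] by simp
    show ?thesis unfolding Suc using IH c
      by (auto simp: nths_Cons list_update_append)
  qed
qed

lemma nths_nth_pos:
  "i \<in> S \<Longrightarrow> i < length xs \<Longrightarrow> card {j\<in>S. j < i} < length (nths xs S) \<and> nths xs S ! card {j\<in>S. j < i} = xs ! i"
proof (induction xs arbitrary: i S)
  case Nil
  then show ?case by simp
next
  case (Cons x l)
  show ?case
  proof (cases i)
    case 0
    then show ?thesis using Cons.prems by (simp add: nths_Cons)
  next
    case (Suc i')
    have i': "i' < length l" "i' \<in> {j. Suc j \<in> S}" using Cons.prems Suc by auto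
    note IH = Cons.IH[OF i'(2,1)]
    have c: "card {j\<in>S. j < Suc i'} = (if 0 \<in> S then 1 else 0) + card {j\<in>{j. Suc j \<in> S}. j < i'}"
      using card_less_Suc[of S i'] by simp
    show ?thesis unfolding Suc using IH c
      by (auto simp: nths_Cons nth_append)
  qed
qed

lemma card_less_Suc_mem: "i \<in> S \<Longrightarrow> card {j\<in>S. j < Suc i} = Suc (card {j\<in>S. j < (i::nat)})"
proof -
  assume i: "i \<in> S"
  have "{j\<in>S. j < Suc i} = insert i {j\<in>S. j < i}" using i by auto
  then show ?thesis by simp
qed

definition swp :: "nat \<Rightarrow> nat \<Rightarrow> nat" where
  "swp i j = (if j = i then Suc i else if j = Suc i then i else j)"

definition tau :: "nat \<Rightarrow> nat set \<Rightarrow> nat set" where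
  "tau i S = {j. swp i j \<in> S}"

lemma swp_swp[simp]: "swp i (swp i j) = j" unfolding swp_def by auto

lemma tau_image: "tau i S = swp i ` S"
  unfolding tau_def by (auto simp: image_iff, metis swp_swp)

lemma tau_tau[simp]: "tau i (tau i S) = S" unfolding tau_def by simp

lemma tau_compl: "- tau i S = tau i (- S)" unfolding tau_def by auto

lemma nths_tau:
  "Suc i < length xs \<Longrightarrow> xs ! i = xs ! Suc i \<Longrightarrow> nths xs (tau i S) = nths xs S"
proof (induction xs arbitrary: i S)
  case Nil
  then show ?case by simp
next
  case (Cons x l)
  show ?case
  proof (cases i)
    case 0
    then obtain y l' where l: "l = y # l'" using Cons.prems by (cases l) auto
    have xy: "x = y" using Cons.prems 0 l by simp
    have e: "{j. Suc j \<in> {j. Suc j \<in> tau 0 S}} = {j. Suc j \<in> {j. Suc j \<in> S}}"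
      unfolding tau_def swp_def by auto
    show ?thesis unfolding 0 l using xy e
      by (auto simp: nths_Cons tau_def swp_def)
  next
    case (Suc i')
    have i': "Suc i' < length l" "l ! i' = l ! Suc i'" using Cons.prems Suc by auto
    have e: "{j. Suc j \<in> tau (Suc i') S} = tau i' {j. Suc j \<in> S}"
      unfolding tau_def swp_def by auto
    have z: "0 \<in> tau (Suc i') S \<longleftrightarrow> 0 \<in> S" unfolding tau_def swp_def by auto
    show ?thesis unfolding Suc using Cons.IH[OF i'] e z
      by (simp add: nths_Cons)
  qed
qed

lemma sum_lower_bound: "finite (S::nat set) \<Longrightarrow> \<Sum>{..<card S} \<le> \<Sum>S"
proof (induction "card S" arbitrary: S)
  case 0
  then show ?case by simp
next
  case (Suc n)
  then have ne: "S \<noteq> {}" by auto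
  define M where "M = Max S"
  have M: "M \<in> S" unfolding M_def using Suc ne by auto
  have c: "card (S - {M}) = n" using Suc M by auto
  have IH: "\<Sum>{..<n} \<le> \<Sum>(S - {M})" using Suc.hyps(1)[of "S - {M}"] c Suc.prems by auto
  have "S \<subseteq> {..M}" unfolding M_def using Suc.prems by auto
  then have "card S \<le> Suc M" using card_mono[of "{..M}" S] by auto
  then have nM: "n \<le> M" using Suc by auto
  have "\<Sum>S = M + \<Sum>(S - {M})" using M Suc.prems by (simp add: sum.remove)
  moreover have "\<Sum>{..<Suc n} = n + \<Sum>{..<n}" by simp
  ultimately show ?case using IH nM Suc.hyps(2) by simp
qed

lemma sum_lessThan_nat: "\<Sum>{..<p::nat} = p * (p - 1) div 2"
  using Sum_Ico_nat[of 0 p] by (simp add: lessThan_atLeast0)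

lemma sign_split: "finite (S::nat set) \<Longrightarrow> card S = p \<Longrightarrow>
   ((-1::rat) ^ (\<Sum>S - p * (p - 1) div 2)) = (-1) ^ (\<Sum>S) * (-1) ^ (p * (p - 1) div 2)"
proof -
  assume f: "finite S" and c: "card S = p"
  have le: "p * (p - 1) div 2 \<le> \<Sum>S" using sum_lower_bound[OF f] c sum_lessThan_nat by simp
  have "(-1::rat) ^ (\<Sum>S) = (-1) ^ (\<Sum>S - p * (p - 1) div 2) * (-1) ^ (p * (p - 1) div 2)"
    using le by (simp add: power_add[symmetric])
  then have "(-1::rat) ^ (\<Sum>S) * (-1) ^ (p * (p - 1) div 2) = (-1) ^ (\<Sum>S - p * (p - 1) div 2) * ((-1) ^ (p * (p - 1) div 2) * (-1) ^ (p * (p - 1) div 2))"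
    by (simp add: mult.assoc)
  also have "(-1::rat) ^ (p * (p - 1) div 2) * (-1) ^ (p * (p - 1) div 2) = 1"
    by (simp add: power_add[symmetric])
  finally show ?thesis by simp
qed



lemma len_nths_sub: "S \<subseteq> {..<length xs} \<Longrightarrow> length (nths xs S) = card S"
proof -
  assume S: "S \<subseteq> {..<length xs}"
  have "{i. i < length xs \<and> i \<in> S} = S" using S by auto
  then show ?thesis by (simp add: length_nths)
qed

lemma len_nths_compl: "S \<subseteq> {..<length xs} \<Longrightarrow> length (nths xs (- S)) = length xs - card S"
proof -
  assume S: "S \<subseteq> {..<length xs}"
  have "{i. i < length xs \<and> i \<in> - S} = {..<length xs} - S" by auto
  moreover have "card ({..<length xs} - S) = length xs - card S" using S by (simp add: card_Diff_subset finite_subset[OF S])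
  ultimately show ?thesis by (simp add: length_nths)
qed

lemma nths_carrier: "set xs \<subseteq> carrier_vec m \<Longrightarrow> set (nths xs S) \<subseteq> carrier_vec m"
  using set_nths_subset[of xs S] by (rule subset_trans)

definition wterm :: "nat \<Rightarrow> (rat vec list \<Rightarrow> rat) \<Rightarrow> (rat vec list \<Rightarrow> rat) \<Rightarrow> rat vec list \<Rightarrow> nat set \<Rightarrow> rat" where
  "wterm p \<alpha> \<beta> xs S = (-1::rat) ^ (\<Sum>S - p * (p - 1) div 2) * \<alpha> (nths xs S) * \<beta> (nths xs (- S))"

lemma wedgeF_wterm: "wedgeF p \<alpha> \<beta> xs = (\<Sum>S\<in>{S. S \<subseteq> {..<length xs} \<and> card S = p}. wterm p \<alpha> \<beta> xs S)"
  unfolding wedgeF_def wterm_def by simp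

lemma wterm_lin:
  assumes a: "mlalt m p \<alpha>" and b: "mlalt m q \<beta>" and len: "length xs = p + q" and car: "set xs \<subseteq> carrier_vec m"
    and S: "S \<subseteq> {..<p+q}" "card S = p" and k: "k < p + q"
    and u: "u \<in> carrier_vec m" and v: "v \<in> carrier_vec m"
  shows "wterm p \<alpha> \<beta> (xs[k := u + v]) S = wterm p \<alpha> \<beta> (xs[k := u]) S + wterm p \<alpha> \<beta> (xs[k := v]) S"
    and "wterm p \<alpha> \<beta> (xs[k := c \<cdot>\<^sub>v u]) S = c * wterm p \<alpha> \<beta> (xs[k := u]) S"
proof -
  have l1: "length (nths xs S) = p" using S len by (simp add: len_nths_sub)
  have l2: "length (nths xs (-S)) = q" using S len by (simp add: len_nths_compl)
  have c1: "set (nths xs S) \<subseteq> carrier_vec m" "set (nths xs (-S)) \<subseteq> carrier_vec m" using nths_carrier[OF car] by auto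
  have kl: "k < length xs" using k len by simp
  have "wterm p \<alpha> \<beta> (xs[k := u + v]) S = wterm p \<alpha> \<beta> (xs[k := u]) S + wterm p \<alpha> \<beta> (xs[k := v]) S
     \<and> wterm p \<alpha> \<beta> (xs[k := c \<cdot>\<^sub>v u]) S = c * wterm p \<alpha> \<beta> (xs[k := u]) S"
  proof (cases "k \<in> S")
    case True
    define pos where "pos = card {j\<in>S. j < k}"
    have pos: "pos < p" using nths_nth_pos[OF True kl] l1 unfolding pos_def by simp
    have ku: "\<And>w. nths (xs[k:=w]) S = (nths xs S)[pos := w]" "\<And>w. nths (xs[k:=w]) (-S) = nths xs (-S)"
      using nths_update[OF kl] True unfolding pos_def by auto
    show ?thesis unfolding wterm_def ku
      using mlalt_add[OF a l1 c1(1) pos u v] mlalt_smult[OF a l1 c1(1) pos u, of c]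
      by (simp add: algebra_simps)
  next
    case False
    then have T: "k \<in> - S" by simp
    define pos where "pos = card {j\<in>-S. j < k}"
    have pos: "pos < q" using nths_nth_pos[OF T kl] l2 unfolding pos_def by simp
    have ku: "\<And>w. nths (xs[k:=w]) (-S) = (nths xs (-S))[pos := w]" "\<And>w. nths (xs[k:=w]) S = nths xs S"
      using nths_update[OF kl] False unfolding pos_def by auto
    show ?thesis unfolding wterm_def ku
      using mlalt_add[OF b l2 c1(2) pos u v] mlalt_smult[OF b l2 c1(2) pos u, of c]
      by (simp add: algebra_simps)
  qed
  then show "wterm p \<alpha> \<beta> (xs[k := u + v]) S = wterm p \<alpha> \<beta> (xs[k := u]) S + wterm p \<alpha> \<beta> (xs[k := v]) S"
    and "wterm p \<alpha> \<beta> (xs[k := c \<cdot>\<^sub>v u]) S = c * wterm p \<alpha> \<beta> (xs[k := u]) S" by auto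
qed

lemma sum_swp:
  assumes f: "finite S" and ex: "(i \<in> S) \<noteq> (Suc i \<in> S)"
  shows "(-1::rat) ^ (\<Sum>(tau i S)) = - ((-1) ^ (\<Sum>S))"
proof -
  have inj: "inj_on (swp i) S" by (metis inj_onI swp_swp)
  have s: "\<Sum>(tau i S) = (\<Sum>j\<in>S. swp i j)" unfolding tau_image using sum.reindex[OF inj, of "\<lambda>x. x"] by simp
  show ?thesis
  proof (cases "i \<in> S")
    case True
    then have n: "Suc i \<notin> S" using ex by auto
    have "(\<Sum>j\<in>S. swp i j) = swp i i + (\<Sum>j\<in>S - {i}. swp i j)" using True f by (simp add: sum.remove)
    also have "(\<Sum>j\<in>S - {i}. swp i j) = (\<Sum>j\<in>S - {i}. j)" using n by (intro sum.cong, auto simp: swp_def)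
    finally have "\<Sum>(tau i S) = Suc (\<Sum>S)" using s True f by (simp add: sum.remove swp_def)
    then show ?thesis by simp
  next
    case False
    then have n: "Suc i \<in> S" using ex by auto
    have "(\<Sum>j\<in>S. swp i j) = swp i (Suc i) + (\<Sum>j\<in>S - {Suc i}. swp i j)" using n f by (simp add: sum.remove)
    also have "(\<Sum>j\<in>S - {Suc i}. swp i j) = (\<Sum>j\<in>S - {Suc i}. j)" using False by (intro sum.cong, auto simp: swp_def)
    finally have "Suc (\<Sum>(tau i S)) = \<Sum>S" using s n f by (simp add: sum.remove swp_def)
    then show ?thesis by (metis power_Suc mult_minus1 minus_minus)
  qed
qed

lemma mlalt_wedgeF:
  assumes a: "mlalt m p \<alpha>" and b: "mlalt m q \<beta>"
  shows "mlalt m (p + q) (wedgeF p \<alpha> \<beta>)"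
proof (rule mlaltI)
  fix xs :: "rat vec list" and k and u v :: "rat vec"
  assume h: "length xs = p + q" "set xs \<subseteq> carrier_vec m" "k < p + q" "u \<in> carrier_vec m" "v \<in> carrier_vec m"
  show "wedgeF p \<alpha> \<beta> (xs[k := u + v]) = wedgeF p \<alpha> \<beta> (xs[k := u]) + wedgeF p \<alpha> \<beta> (xs[k := v])"
    unfolding wedgeF_wterm using h wterm_lin(1)[OF a b h(1,2) _ _ h(3,4,5)]
    by (simp add: sum.distrib[symmetric])
next
  fix xs :: "rat vec list" and k and u :: "rat vec" and c
  assume h: "length xs = p + q" "set xs \<subseteq> carrier_vec m" "k < p + q" "u \<in> carrier_vec m"
  show "wedgeF p \<alpha> \<beta> (xs[k := c \<cdot>\<^sub>v u]) = c * wedgeF p \<alpha> \<beta> (xs[k := u])"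
    unfolding wedgeF_wterm using h wterm_lin(2)[OF a b h(1,2) _ _ h(3,4,4)]
    by (simp add: sum_distrib_left)
next
  fix xs :: "rat vec list" and i
  assume h: "length xs = p + q" "set xs \<subseteq> carrier_vec m" "Suc i < p + q" "xs ! i = xs ! Suc i"
  define SS where "SS = {S. S \<subseteq> {..<p+q} \<and> card S = p}"
  define E where "E = {S\<in>SS. (i \<in> S) \<noteq> (Suc i \<in> S)}"
  have "SS \<subseteq> Pow {..<p+q}" unfolding SS_def by auto
  then have fin: "finite SS" by (rule finite_subset) simp
  have EN: "SS = E \<union> (SS - E)" "E \<inter> (SS - E) = {}" unfolding E_def by auto
  have N0: "\<And>S. S \<in> SS - E \<Longrightarrow> wterm p \<alpha> \<beta> xs S = 0"
  proof -
    fix S assume S: "S \<in> SS - E"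
    have Sp: "S \<subseteq> {..<p+q}" "card S = p" using S unfolding SS_def by auto
    have l1: "length (nths xs S) = p" using Sp h by (simp add: len_nths_sub)
    have l2: "length (nths xs (-S)) = q" using Sp h by (simp add: len_nths_compl)
    have c1: "set (nths xs S) \<subseteq> carrier_vec m" "set (nths xs (-S)) \<subseteq> carrier_vec m" using nths_carrier[OF h(2)] by auto
    have il: "i < length xs" "Suc i < length xs" using h by auto
    show "wterm p \<alpha> \<beta> xs S = 0"
    proof (cases "i \<in> S")
      case True
      then have T2: "Suc i \<in> S" using S unfolding E_def by auto
      note P1 = nths_nth_pos[OF True il(1)] and P2 = nths_nth_pos[OF T2 il(2)]
      have "\<alpha> (nths xs S) = 0"
        by (rule mlalt_adj[OF a l1 c1(1), of "card {j\<in>S. j < i}"], insert P1 P2 card_less_Suc_mem[OF True] l1 h, auto)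
      then show ?thesis unfolding wterm_def by simp
    next
      case False
      then have T1: "i \<in> - S" and T2: "Suc i \<in> - S" using S unfolding E_def by auto
      note P1 = nths_nth_pos[OF T1 il(1)] and P2 = nths_nth_pos[OF T2 il(2)]
      have "\<beta> (nths xs (-S)) = 0"
        by (rule mlalt_adj[OF b l2 c1(2), of "card {j\<in>-S. j < i}"], insert P1 P2 card_less_Suc_mem[OF T1] l2 h, auto)
      then show ?thesis unfolding wterm_def by simp
    qed
  qed
  have tauE: "\<And>S. S \<in> E \<Longrightarrow> tau i S \<in> E"
  proof -
    fix S assume S: "S \<in> E"
    have "tau i S \<subseteq> {..<p+q}" using S h(3) unfolding E_def SS_def tau_def swp_def by (auto split: if_splits)
    moreover have "card (tau i S) = card S" unfolding tau_image by (rule card_image, metis inj_onI swp_swp)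
    moreover have "(i \<in> tau i S) \<noteq> (Suc i \<in> tau i S)" using S unfolding E_def tau_def swp_def by auto
    ultimately show "tau i S \<in> E" using S unfolding E_def SS_def by auto
  qed
  have neg: "\<And>S. S \<in> E \<Longrightarrow> wterm p \<alpha> \<beta> xs (tau i S) = - wterm p \<alpha> \<beta> xs S"
  proof -
    fix S assume S: "S \<in> E"
    have Sp: "S \<subseteq> {..<p+q}" "card S = p" "finite S" using S unfolding E_def SS_def by (auto intro: finite_subset)
    have T: "tau i S \<in> E" using tauE[OF S] .
    have Tp: "card (tau i S) = p" "finite (tau i S)" using T unfolding E_def SS_def by (auto intro: finite_subset)
    have n1: "nths xs (tau i S) = nths xs S" by (rule nths_tau, insert h, auto)
    have n2: "nths xs (- tau i S) = nths xs (- S)" unfolding tau_compl by (rule nths_tau, insert h, auto)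
    have sg: "(-1::rat) ^ (\<Sum>(tau i S)) = - ((-1) ^ (\<Sum>S))" by (rule sum_swp, insert S Sp, auto simp: E_def)
    show "wterm p \<alpha> \<beta> xs (tau i S) = - wterm p \<alpha> \<beta> xs S"
      unfolding wterm_def n1 n2 sign_split[OF Sp(3,2)] sign_split[OF Tp(2,1)] sg by simp
  qed
  have "(\<Sum>S\<in>E. wterm p \<alpha> \<beta> xs S) = (\<Sum>S\<in>E. wterm p \<alpha> \<beta> xs (tau i S))"
    by (rule sum.reindex_bij_witness[of _ "tau i" "tau i"], insert tauE, auto)
  also have "\<dots> = - (\<Sum>S\<in>E. wterm p \<alpha> \<beta> xs S)" using neg by (simp add: sum_negf)
  finally have E0: "(\<Sum>S\<in>E. wterm p \<alpha> \<beta> xs S) = 0" by simp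
  have "(\<Sum>S\<in>SS. wterm p \<alpha> \<beta> xs S) = (\<Sum>S\<in>E. wterm p \<alpha> \<beta> xs S) + (\<Sum>S\<in>SS - E. wterm p \<alpha> \<beta> xs S)"
  proof -
    have "E \<subseteq> SS" unfolding E_def by auto
    from sum.subset_diff[OF this fin] show ?thesis by (simp add: add.commute)
  qed
  also have "\<dots> = 0" using E0 N0 by simp
  finally show "wedgeF p \<alpha> \<beta> xs = 0" unfolding wedgeF_wterm SS_def using h by simp
qed



lemma mlalt_vol_pre:
  assumes "set pre \<subseteq> carrier_vec m" "length pre + n = m"
  shows "mlalt m n (\<lambda>xs. volV m cw (pre @ xs))"
  using mlalt_vol[of pre m "[]" n cw] assms by simp

lemma vol_zero_span:
  assumes "length (pre @ u) = m" "set (pre @ u) \<subseteq> carrier_vec m" "v \<in> set u" "in_span m pre v"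
  shows "volV m cw (pre @ u) = 0"
proof -
  obtain k where k: "k < length u" "u ! k = v" using assms(3) by (auto simp: in_set_conv_nth)
  have "det (mat_of_cols m (pre @ u)) = 0"
    by (rule det_zero_in_span_prefix[OF assms(1,2) k(1)], insert k assms, auto)
  then show ?thesis unfolding volV_def by simp
qed

lemma wedge_zero:
  assumes v: "v \<in> set u" and car: "set u \<subseteq> carrier_vec m" and len: "length u = p + q"
    and a: "\<And>u1. set u1 \<subseteq> carrier_vec m \<Longrightarrow> length u1 = p \<Longrightarrow> v \<in> set u1 \<Longrightarrow> \<alpha> u1 = 0"
    and b: "\<And>u2. set u2 \<subseteq> carrier_vec m \<Longrightarrow> length u2 = q \<Longrightarrow> v \<in> set u2 \<Longrightarrow> \<beta> u2 = 0"
  shows "wedgeF p \<alpha> \<beta> u = 0"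
  unfolding wedgeF_wterm
proof (rule sum.neutral, rule ballI)
  fix S assume S: "S \<in> {S. S \<subseteq> {..<length u} \<and> card S = p}"
  obtain t where t: "t < length u" "u ! t = v" using v by (auto simp: in_set_conv_nth)
  have l1: "length (nths u S) = p" using S by (simp add: len_nths_sub)
  have l2: "length (nths u (-S)) = q" using S len by (simp add: len_nths_compl)
  have c1: "set (nths u S) \<subseteq> carrier_vec m" "set (nths u (-S)) \<subseteq> carrier_vec m" using nths_carrier[OF car] by auto
  show "wterm p \<alpha> \<beta> u S = 0"
  proof (cases "t \<in> S")
    case True
    then have "v \<in> set (nths u S)" using t by (auto simp: set_nths)
    then have "\<alpha> (nths u S) = 0" using a c1 l1 by auto
    then show ?thesis unfolding wterm_def by simp
  next
    case False
    then have "v \<in> set (nths u (-S))" using t by (auto simp: set_nths)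
    then have "\<beta> (nths u (-S)) = 0" using b c1 l2 by auto
    then show ?thesis unfolding wterm_def by simp
  qed
qed

lemma sum_single: "finite A \<Longrightarrow> a0 \<in> A \<Longrightarrow> (\<And>x. x \<in> A \<Longrightarrow> x \<noteq> a0 \<Longrightarrow> f x = 0) \<Longrightarrow> sum f A = f a0"
  by (simp add: sum.remove sum.neutral)

lemma det_unit_update:
  fixes v :: "rat vec"
  assumes v: "v \<in> carrier_vec m" and t: "t < m"
  shows "det (mat_of_cols m ((unit_vecs m)[t := v])) = v $ t"
proof -
  let ?e = "unit_vecs m :: rat vec list"
  have le: "length ?e = m" "set ?e \<subseteq> carrier_vec m" by (auto simp: unit_vecs_def)
  have "det (mat_of_cols m (?e[t := v])) = det (mat_of_cols m (?e[t := lc m (\<lambda>j. v $ j) (unit_vec m) {..<m}]))"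
    using unit_expand[OF v] by simp
  also have "\<dots> = (\<Sum>j\<in>{..<m}. v $ j * det (mat_of_cols m (?e[t := unit_vec m j])))"
    by (rule mlalt_lc[OF mlalt_det le t], auto)
  also have "\<dots> = v $ t * det (mat_of_cols m (?e[t := unit_vec m t]))"
  proof (rule sum_single)
    fix j assume j: "j \<in> {..<m}" "j \<noteq> t"
    have "det (mat_of_cols m (?e[t := unit_vec m j])) = 0"
      by (rule mlalt_eq_zero'[OF mlalt_det, where i=t and j=j], insert j t le, auto simp: unit_vecs_def nth_list_update set_update_carrier)
    then show "v $ j * det (mat_of_cols m (?e[t := unit_vec m j])) = 0" by simp
  qed (insert t, auto)
  also have "?e[t := unit_vec m t] = ?e"
  proof -
    have "?e ! t = unit_vec m t" using t by (simp add: unit_vecs_def)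
    then show ?thesis by (metis list_update_id)
  qed
  finally show ?thesis by (simp add: det_unit_vecs)
qed

text \<open>splitting a vector into three consecutive pieces\<close>
lemma split3:
  fixes u :: "rat vec" and x y z :: "rat vec list"
  assumes u: "u \<in> carrier_vec (length x + length y + length z)"
    and car: "set (x @ y @ z) \<subseteq> carrier_vec m"
  defines "ux \<equiv> vec (length x) (\<lambda>i. u $ i)"
    and "uy \<equiv> vec (length y) (\<lambda>i. u $ (length x + i))"
    and "uz \<equiv> vec (length z) (\<lambda>i. u $ (length x + length y + i))"
  shows "mat_of_cols m (x @ y @ z) *\<^sub>v u = mat_of_cols m x *\<^sub>v ux + mat_of_cols m y *\<^sub>v uy + mat_of_cols m z *\<^sub>v uz"
    and "ux = 0\<^sub>v (length x) \<Longrightarrow> uy = 0\<^sub>v (length y) \<Longrightarrow> uz = 0\<^sub>v (length z) \<Longrightarrow> u = 0\<^sub>v (length x + length y + length z)"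
proof -
  let ?n = "length x + length y + length z"
  have ud: "u = pad ?n 0 ux + pad ?n (length x) uy + pad ?n (length x + length y) uz"
    by (rule eq_vecI, insert u, auto simp: pad_def ux_def uy_def uz_def)
  have c: "ux \<in> carrier_vec (length x)" "uy \<in> carrier_vec (length y)" "uz \<in> carrier_vec (length z)"
    unfolding ux_def uy_def uz_def by auto
  have M: "mat_of_cols m (x @ y @ z) \<in> carrier_mat m ?n" using mat_of_cols_carrier(1)[of m "x @ y @ z"] by (simp add: add.assoc)
  have e1: "mat_of_cols m (x @ y @ z) *\<^sub>v pad ?n 0 ux = mat_of_cols m x *\<^sub>v ux"
    using pad_mult[OF c(1), of ?n "[]" "y @ z" m] by simp
  have e2: "mat_of_cols m (x @ y @ z) *\<^sub>v pad ?n (length x) uy = mat_of_cols m y *\<^sub>v uy"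
    using pad_mult[OF c(2), of ?n x z m] by simp
  have e3: "mat_of_cols m (x @ y @ z) *\<^sub>v pad ?n (length x + length y) uz = mat_of_cols m z *\<^sub>v uz"
    using pad_mult[OF c(3), of ?n "x @ y" "[]" m] by simp
  show "mat_of_cols m (x @ y @ z) *\<^sub>v u = mat_of_cols m x *\<^sub>v ux + mat_of_cols m y *\<^sub>v uy + mat_of_cols m z *\<^sub>v uz"
  proof -
    let ?M = "mat_of_cols m (x @ y @ z)"
    have "?M *\<^sub>v u = ?M *\<^sub>v (pad ?n 0 ux + pad ?n (length x) uy) + ?M *\<^sub>v pad ?n (length x + length y) uz"
      by (subst ud, rule mult_add_distrib_mat_vec[OF M], auto)
    also have "?M *\<^sub>v (pad ?n 0 ux + pad ?n (length x) uy) = ?M *\<^sub>v pad ?n 0 ux + ?M *\<^sub>v pad ?n (length x) uy"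
      by (rule mult_add_distrib_mat_vec[OF M], auto)
    finally show ?thesis unfolding e1 e2 e3 .
  qed
  show "ux = 0\<^sub>v (length x) \<Longrightarrow> uy = 0\<^sub>v (length y) \<Longrightarrow> uz = 0\<^sub>v (length z) \<Longrightarrow> u = 0\<^sub>v ?n"
  proof -
    assume z: "ux = 0\<^sub>v (length x)" "uy = 0\<^sub>v (length y)" "uz = 0\<^sub>v (length z)"
    show "u = 0\<^sub>v ?n"
    proof (rule eq_vecI)
      fix i assume i: "i < dim_vec (0\<^sub>v ?n :: rat vec)"
      then have i': "i < ?n" by simp
      show "u $ i = 0\<^sub>v ?n $ i"
      proof (cases "i < length x")
        case True
        then have "ux $ i = u $ i" unfolding ux_def by simp
        then show ?thesis using z True i' by simp
      next
        case False
        show ?thesis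
        proof (cases "i < length x + length y")
          case True
          have ii: "length x + (i - length x) = i" using False by simp
          have "uy $ (i - length x) = u $ i" unfolding uy_def using False True ii by simp
          then show ?thesis using z True False i' by simp
        next
          case False2: False
          have ii: "length x + length y + (i - length x - length y) = i" using False2 by simp
          have "uz $ (i - length x - length y) = u $ i" unfolding uz_def using False2 i' ii by simp
          then show ?thesis using z False2 False i' by simp
        qed
      qed
    qed (insert u, auto)
  qed
qed

lemma vol_sub_eval:
  fixes B W :: "rat vec list"
  assumes B: "set B \<subseteq> carrier_vec m" "length B = k" and W: "set W \<subseteq> carrier_vec m" "length W = k"
    and sp: "\<And>w. w \<in> set W \<Longrightarrow> in_span m B w"
    and inj: "\<And>x. x \<in> carrier_vec k \<Longrightarrow> mat_of_cols m B *\<^sub>v x = 0\<^sub>v m \<Longrightarrow> x = 0\<^sub>v k"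
  shows "\<exists>cs. length cs = k \<and> set cs \<subseteq> carrier_vec k \<and> W = map (\<lambda>c. mat_of_cols m B *\<^sub>v c) cs \<and>
     vol_sub m B K W = K * det (mat_of_cols k cs)"
proof -
  have "\<forall>j<k. \<exists>x. x \<in> carrier_vec (length B) \<and> W ! j = mat_of_cols m B *\<^sub>v x"
    using sp W unfolding in_span_def by (metis nth_mem)
  then obtain c where c: "\<And>j. j < k \<Longrightarrow> c j \<in> carrier_vec k \<and> W ! j = mat_of_cols m B *\<^sub>v c j"
    using B by metis
  define cs where "cs = map c [0..<k]"
  have cs: "length cs = k" "set cs \<subseteq> carrier_vec k" unfolding cs_def using c by auto
  have Wm: "W = map (\<lambda>c. mat_of_cols m B *\<^sub>v c) cs"
    by (rule nth_equalityI, insert W c, auto simp: cs_def)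
  define M0 where "M0 = mat_of_cols k cs"
  have M0: "M0 \<in> carrier_mat k k" unfolding M0_def using cs by auto
  have Bc: "mat_of_cols m B \<in> carrier_mat m k" using B by auto
  have eq0: "mat_of_cols m W = mat_of_cols m B * M0"
  proof (rule eq_matI)
    fix i j assume i: "i < dim_row (mat_of_cols m B * M0)" and j: "j < dim_col (mat_of_cols m B * M0)"
    have j': "j < k" using j M0 by auto
    have "col M0 j = c j" unfolding M0_def cs_def using c[OF j'] j' by (subst col_mat_of_cols, auto)
    then have "(mat_of_cols m B * M0) $$ (i,j) = (mat_of_cols m B *\<^sub>v c j) $ i" using i j by auto
    then show "mat_of_cols m W $$ (i, j) = (mat_of_cols m B * M0) $$ (i, j)"
      using c[OF j'] i j' W by (auto simp: mat_of_cols_index)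
  qed (insert W M0, auto)
  have uniq: "\<And>M. M \<in> carrier_mat k k \<and> mat_of_cols m W = mat_of_cols m B * M \<Longrightarrow> M = M0"
  proof -
    fix M assume M: "M \<in> carrier_mat k k \<and> mat_of_cols m W = mat_of_cols m B * M"
    have cj: "\<And>j. j < k \<Longrightarrow> col M j = col M0 j"
    proof -
      fix j assume j: "j < k"
      have "mat_of_cols m B *\<^sub>v col M j = col (mat_of_cols m B * M) j" using M Bc j by (subst col_mult2[of _ m k _ k], auto)
      also have "\<dots> = col (mat_of_cols m B * M0) j" using M eq0 by simp
      also have "\<dots> = mat_of_cols m B *\<^sub>v col M0 j" using M0 Bc j by (subst col_mult2[of _ m k _ k], auto)
      finally have e: "mat_of_cols m B *\<^sub>v col M j = mat_of_cols m B *\<^sub>v col M0 j" .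
      have cc: "col M j \<in> carrier_vec k" "col M0 j \<in> carrier_vec k" using M M0 by auto
      have "mat_of_cols m B *\<^sub>v (col M j - col M0 j) = 0\<^sub>v m"
        by (subst mult_minus_distrib_mat_vec[OF Bc cc], insert e Bc cc, auto)
      then have zz: "col M j - col M0 j = 0\<^sub>v k" using inj cc by auto
      show "col M j = col M0 j"
      proof (rule eq_vecI)
        fix i assume "i < dim_vec (col M0 j)"
        then have i: "i < k" using M0 by auto
        have d: "dim_vec (col M0 j) = k" using M0 by auto
        have "(col M j - col M0 j) $ i = 0" using zz i by simp
        moreover have "(col M j - col M0 j) $ i = col M j $ i - col M0 j $ i"
          using index_minus_vec(1)[of i "col M0 j" "col M j"] i d by simp
        ultimately show "col M j $ i = col M0 j $ i" by simp
      qed (insert M M0, auto)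
    qed
    show "M = M0"
    proof (rule eq_matI)
      fix i j assume i: "i < dim_row M0" and j: "j < dim_col M0"
      have ij: "i < k" "j < k" using i j M0 by auto
      have "M $$ (i, j) = col M j $ i" using M ij by auto
      also have "\<dots> = col M0 j $ i" using cj[OF ij(2)] by simp
      also have "\<dots> = M0 $$ (i, j)" using M0 ij by auto
      finally show "M $$ (i, j) = M0 $$ (i, j)" .
    qed (insert M M0, auto)
  qed
  have "(THE M. M \<in> carrier_mat (length B) (length W) \<and> mat_of_cols m W = mat_of_cols m B * M) = M0"
  proof (rule the_equality)
    show "M0 \<in> carrier_mat (length B) (length W) \<and> mat_of_cols m W = mat_of_cols m B * M0"
      using M0 eq0 B W by simp
    show "\<And>M. M \<in> carrier_mat (length B) (length W) \<and> mat_of_cols m W = mat_of_cols m B * M \<Longrightarrow> M = M0"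
      using uniq B W by simp
  qed
  then have "vol_sub m B K W = K * det M0" unfolding vol_sub_def by simp
  then show ?thesis using cs Wm unfolding M0_def by blast
qed



lemma kernel2:
  fixes pre P Q post :: "rat vec list" and s t :: "rat vec"
  assumes d: "det (mat_of_cols m (pre @ P @ Q @ post)) \<noteq> 0" and len: "length (pre @ P @ Q @ post) = m"
    and car: "set (pre @ P @ Q @ post) \<subseteq> carrier_vec m"
    and s: "s \<in> carrier_vec (length P)" and t: "t \<in> carrier_vec (length Q)"
    and z: "mat_of_cols m P *\<^sub>v s + mat_of_cols m Q *\<^sub>v t = 0\<^sub>v m"
  shows "s = 0\<^sub>v (length P) \<and> t = 0\<^sub>v (length Q)"
proof -
  let ?N = "mat_of_cols m (pre @ P @ Q @ post)"
  let ?u = "pad m (length pre) s + pad m (length pre + length P) t"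
  have N: "?N \<in> carrier_mat m m" using len by auto
  have e1: "?N *\<^sub>v pad m (length pre) s = mat_of_cols m P *\<^sub>v s"
    by (rule pad_mult[OF s], insert len, simp)
  have e2: "?N *\<^sub>v pad m (length pre + length P) t = mat_of_cols m Q *\<^sub>v t"
    using pad_mult[OF t, of m "pre @ P" post m] len by (simp add: add.assoc)
  have "?N *\<^sub>v ?u = 0\<^sub>v m"
    by (subst mult_add_distrib_mat_vec[OF N], auto simp: e1 e2 z)
  moreover have "?u \<in> carrier_vec m" by simp
  ultimately have u0: "?u = 0\<^sub>v m"
    using det_0_iff_vec_prod_zero_field[OF N] d by blast
  have "s = 0\<^sub>v (length P)"
  proof (rule eq_vecI)
    fix i assume i: "i < dim_vec (0\<^sub>v (length P) :: rat vec)"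
    then have "?u $ (length pre + i) = 0" using u0 len by simp
    moreover have "?u $ (length pre + i) = s $ i" using i len s t by (simp add: pad_def)
    ultimately show "s $ i = 0\<^sub>v (length P) $ i" using i by simp
  qed (insert s, auto)
  moreover have "t = 0\<^sub>v (length Q)"
  proof (rule eq_vecI)
    fix i assume i: "i < dim_vec (0\<^sub>v (length Q) :: rat vec)"
    then have "?u $ (length pre + length P + i) = 0" using u0 len by simp
    moreover have "?u $ (length pre + length P + i) = t $ i" using i len s t by (simp add: pad_def)
    ultimately show "t $ i = 0\<^sub>v (length Q) $ i" using i by simp
  qed (insert t, auto)
  ultimately show ?thesis by simp
qed

lemma dflag_facts:
  assumes "dflag m cw D" "i \<le> m"
  shows "length (D i) = i" "set (D i) \<subseteq> carrier_vec m" "vecs_in m (D i)" "wedge_nonzero m (D i)"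
  using assms unfolding dflag_def vecs_in_def by auto

lemma WE_F:
  assumes F: "dflag m cw F" and bFG: "basis_FG m F G fl" and k: "k \<le> m" and ml: "mlalt m k \<theta>"
  shows "\<theta> (take k fl) = \<theta> (F k)"
proof (cases "k = 0")
  case True
  then have "F k = []" using dflag_facts(1)[OF F, of 0] by simp
  then show ?thesis using True by simp
next
  case False
  have fl: "length fl = m" "set fl \<subseteq> carrier_vec m" using bFG unfolding basis_FG_def vecs_in_def by auto
  have kk: "k \<in> {1..m}" using False k by auto
  have we: "wedge_eq m (take k fl) (F k)" using bFG kk unfolding basis_FG_def by auto
  show ?thesis
  proof (rule wedge_eq_transfer[OF we dflag_facts(4)[OF F k] dflag_facts(1)[OF F k] dflag_facts(3)[OF F k] _ ml])
    fix v assume v: "v \<in> set (take k fl)"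
    then obtain j where j: "j < k" "v = fl ! j" using fl k by (auto simp: in_set_conv_nth)
    have "in_span m (F (Suc j)) (fl ! j)" using bFG j k unfolding basis_FG_def by (metis One_nat_def Suc_leI atLeastAtMost_iff diff_Suc_1 le_trans not_less_eq_eq zero_less_Suc less_imp_le_nat)
    then show "in_span m (F k) v" using dflag_chain[OF F, of "Suc j" k] j k by auto
  qed
qed

lemma WE_H:
  assumes H: "dflag m cw H" and bGH: "basis_GH m G H hl" and k: "k \<le> m" and ml: "mlalt m k \<theta>"
  shows "\<theta> (rev (take k hl)) = \<theta> (H k)"
proof (cases "k = 0")
  case True
  then have "H k = []" using dflag_facts(1)[OF H, of 0] by simp
  then show ?thesis using True by simp
next
  case False
  have hl: "length hl = m" "set hl \<subseteq> carrier_vec m" using bGH unfolding basis_GH_def vecs_in_def by auto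
  have kk: "k \<in> {1..m}" using False k by auto
  have we: "wedge_eq m (rev (take k hl)) (H k)" using bGH kk unfolding basis_GH_def by auto
  show ?thesis
  proof (rule wedge_eq_transfer[OF we dflag_facts(4)[OF H k] dflag_facts(1)[OF H k] dflag_facts(3)[OF H k] _ ml])
    fix v assume v: "v \<in> set (rev (take k hl))"
    then obtain j where j: "j < k" "v = hl ! j" using hl k by (auto simp: in_set_conv_nth)
    have "in_span m (H (Suc j)) (hl ! j)" using bGH j k unfolding basis_GH_def by (metis One_nat_def Suc_leI atLeastAtMost_iff diff_Suc_1 le_trans not_less_eq_eq zero_less_Suc less_imp_le_nat)
    then show "in_span m (H k) v" using dflag_chain[OF H, of "Suc j" k] j k by auto
  qed
qed

lemma span_G_fl:
  assumes G: "dflag m cw G" and bFG: "basis_FG m F G fl" and j: "b \<le> j" "j < m"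
  shows "in_span m (G (m - b)) (fl ! j)"
proof -
  have "in_span m (G (m + 1 - Suc j)) (fl ! j)" using bFG j unfolding basis_FG_def by force
  then show ?thesis using dflag_chain[OF G, of "m - j" "m - b"] j by auto
qed

lemma span_G_hl:
  assumes G: "dflag m cw G" and bGH: "basis_GH m G H hl" and j: "b \<le> j" "j < m"
  shows "in_span m (G (m - b)) (hl ! j)"
proof -
  have "in_span m (G (m + 1 - Suc j)) (hl ! j)" using bGH j unfolding basis_GH_def by force
  then show ?thesis using dflag_chain[OF G, of "m - j" "m - b"] j by auto
qed



lemma mlalt_vol_post:
  assumes "set post \<subseteq> carrier_vec m" "n + length post = m"
  shows "mlalt m n (\<lambda>xs. volV m cw (xs @ post))"
  using mlalt_vol[of "[]" m post n cw] assms by simp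

lemma vol_nz_det: "volV m cw xs \<noteq> 0 \<Longrightarrow> det (mat_of_cols m xs) \<noteq> 0"
  unfolding volV_def by auto

lemma mat_of_cols_mult_zero: "mat_of_cols m (ys :: rat vec list) *\<^sub>v 0\<^sub>v (length ys) = 0\<^sub>v m"
proof (rule eq_vecI)
  fix i assume "i < dim_vec (0\<^sub>v m :: rat vec)"
  then have i: "i < m" by simp
  show "(mat_of_cols m ys *\<^sub>v 0\<^sub>v (length ys)) $ i = 0\<^sub>v m $ i"
    by (subst mat_of_cols_mult_vec_index[OF i], auto simp: i)
qed simp

theorem lemma6p25p15:
  fixes m :: nat and cw :: rat and F G H :: "nat \<Rightarrow> rat vec list"
    and fl hl :: "rat vec list" and a b c :: nat
  assumes "cw \<noteq> 0"
    and "dflag m cw F" and "dflag m cw G" and "dflag m cw H"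
    and "generic_triple m cw F G H"
    and "basis_FG m F G fl" and "basis_GH m G H hl"
    and "a + b + c = m"
    and "(a, b, c) \<notin> {(m, 0, 0), (0, m, 0), (0, 0, m)}"
  shows "Delta_dual m cw F G H a b c = Delta_s m cw F G H fl hl b c 0 a"
proof -
  note cw = assms(1) and hF = assms(2) and hG = assms(3) and hH = assms(4) and gen = assms(5)
    and bFG = assms(6) and bGH = assms(7) and abc = assms(8)
  have fl: "length fl = m" "set fl \<subseteq> carrier_vec m" using bFG unfolding basis_FG_def vecs_in_def by auto
  have hl: "length hl = m" "set hl \<subseteq> carrier_vec m" using bGH unfolding basis_GH_def vecs_in_def by auto
  define B where "B = G (m - b)"
  have Bf: "length B = m - b" "set B \<subseteq> carrier_vec m" unfolding B_def using dflag_facts[OF hG, of "m - b"] by auto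
  define Fb where "Fb = take b fl"
  define z where "z = take c (drop b fl)"
  define A' where "A' = take (b + c) fl"
  have A'eq: "A' = Fb @ z" unfolding A'_def Fb_def z_def by (simp add: take_add)
  define x where "x = rev (take a (drop b hl))"
  define y where "y = rev (take b hl)"
  define C' where "C' = rev (take (a + b) hl)"
  have C'eq: "C' = x @ y" unfolding C'_def x_def y_def by (simp add: take_add add.commute[of a b])
  have lens: "length Fb = b" "length z = c" "length A' = b + c" "length x = a" "length y = b" "length C' = a + b"
    unfolding Fb_def z_def A'_def x_def y_def C'_def using fl hl abc by auto
  have cars: "set Fb \<subseteq> carrier_vec m" "set z \<subseteq> carrier_vec m" "set A' \<subseteq> carrier_vec m"
     "set x \<subseteq> carrier_vec m" "set y \<subseteq> carrier_vec m" "set C' \<subseteq> carrier_vec m"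
    unfolding Fb_def z_def A'_def x_def y_def C'_def using fl hl
    by (auto dest: in_set_takeD in_set_dropD)
  have zB: "\<And>v. v \<in> set z \<Longrightarrow> in_span m B v"
  proof -
    fix v assume "v \<in> set z"
    then obtain j where j: "j < c" "v = fl ! (b + j)" unfolding z_def using fl abc by (auto simp: in_set_conv_nth)
    show "in_span m B v" unfolding B_def j(2) by (rule span_G_fl[OF hG bFG], insert j abc, auto)
  qed
  have xB: "\<And>v. v \<in> set x \<Longrightarrow> in_span m B v"
  proof -
    fix v assume "v \<in> set x"
    then have "v \<in> set (take a (drop b hl))" unfolding x_def by simp
    then obtain j where j: "j < a" "v = hl ! (b + j)" using hl abc by (auto simp: in_set_conv_nth)
    show "in_span m B v" unfolding B_def j(2) by (rule span_G_hl[OF hG bGH], insert j abc, auto)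
  qed
  have zA: "\<And>v. v \<in> set z \<Longrightarrow> in_span m A' v" using cars by (intro in_span_member, auto simp: A'eq)
  have xC: "\<And>v. v \<in> set x \<Longrightarrow> in_span m C' v" using cars by (intro in_span_member, auto simp: C'eq)
  define \<alpha>0 where "\<alpha>0 = star m cw (F (m - a))"
  define \<beta>0 where "\<beta>0 = star m cw B"
  define \<gamma>0 where "\<gamma>0 = star m cw (H (m - c))"
  have ml\<alpha>: "mlalt m a \<alpha>0" unfolding \<alpha>0_def star_def
    by (rule mlalt_vol_pre, insert dflag_facts[OF hF, of "m - a"] abc, auto)
  have ml\<beta>: "mlalt m b \<beta>0" unfolding \<beta>0_def star_def
    by (rule mlalt_vol_pre, insert Bf abc, auto)
  have ml\<gamma>: "mlalt m c \<gamma>0" unfolding \<gamma>0_def star_def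
    by (rule mlalt_vol_pre, insert dflag_facts[OF hH, of "m - c"] abc, auto)
  have \<alpha>eq: "\<And>u. length u = a \<Longrightarrow> set u \<subseteq> carrier_vec m \<Longrightarrow> \<alpha>0 u = volV m cw (A' @ u)"
  proof -
    fix u :: "rat vec list" assume u: "length u = a" "set u \<subseteq> carrier_vec m"
    have "volV m cw (take (b + c) fl @ u) = volV m cw (F (b + c) @ u)"
      by (rule WE_F[OF hF bFG, of "b + c" "\<lambda>us. volV m cw (us @ u)"], insert abc u, auto intro!: mlalt_vol_post)
    moreover have "m - a = b + c" using abc by simp
    ultimately show "\<alpha>0 u = volV m cw (A' @ u)" unfolding \<alpha>0_def star_def A'_def by simp
  qed
  have \<gamma>eq: "\<And>u. length u = c \<Longrightarrow> set u \<subseteq> carrier_vec m \<Longrightarrow> \<gamma>0 u = volV m cw (C' @ u)"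
  proof -
    fix u :: "rat vec list" assume u: "length u = c" "set u \<subseteq> carrier_vec m"
    have "volV m cw (rev (take (a + b) hl) @ u) = volV m cw (H (a + b) @ u)"
      by (rule WE_H[OF hH bGH, of "a + b" "\<lambda>us. volV m cw (us @ u)"], insert abc u, auto intro!: mlalt_vol_post)
    moreover have "m - c = a + b" using abc by simp
    ultimately show "\<gamma>0 u = volV m cw (C' @ u)" unfolding \<gamma>0_def star_def C'_def by simp
  qed
  have \<beta>eq: "\<And>u. \<beta>0 u = volV m cw (B @ u)" unfolding \<beta>0_def star_def by simp
  have genv: "\<And>i j k. i + j + k = m \<Longrightarrow> volV m cw (F i @ G j @ H k) \<noteq> 0"
    using gen unfolding generic_triple_def by blast
  have F0: "F 0 = []" and H0: "H 0 = []" using dflag_facts(1)[OF hF, of 0] dflag_facts(1)[OF hH, of 0] by auto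
  have nz1: "volV m cw (F b @ B) \<noteq> 0" using genv[of b "m - b" 0] abc H0 unfolding B_def by auto
  have nz2: "volV m cw (B @ H b) \<noteq> 0" using genv[of 0 "m - b" b] abc F0 unfolding B_def by auto
  have e1: "volV m cw (F b @ B) = volV m cw (Fb @ B)"
    unfolding Fb_def by (rule WE_F[OF hF bFG, of b "\<lambda>us. volV m cw (us @ B)", symmetric], insert abc Bf, auto intro!: mlalt_vol_post)
  have e2: "volV m cw (B @ H b) = volV m cw (B @ y)"
    unfolding y_def by (rule WE_H[OF hH bGH, of b "\<lambda>us. volV m cw (B @ us)", symmetric], insert abc Bf, auto intro!: mlalt_vol_pre)
  have dfl: "det (mat_of_cols m fl) \<noteq> 0"
  proof -
    have "volV m cw (take m fl @ []) = volV m cw (F m @ [])"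
      by (rule WE_F[OF hF bFG, of m "\<lambda>us. volV m cw (us @ [])"], insert mlalt_vol_post[of "[]" m m cw], auto)
    then have "volV m cw fl = 1" using hF fl unfolding dflag_def by simp
    then show ?thesis using vol_nz_det[of m cw] by force
  qed
  have dhl: "det (mat_of_cols m (rev hl)) \<noteq> 0"
  proof -
    have "volV m cw (rev (take m hl) @ []) = volV m cw (H m @ [])"
      by (rule WE_H[OF hH bGH, of m "\<lambda>us. volV m cw (us @ [])"], insert mlalt_vol_post[of "[]" m m cw], auto)
    then have "volV m cw (rev hl) = 1" using hH hl unfolding dflag_def by simp
    then show ?thesis using vol_nz_det[of m cw] by force
  qed
  have dFbB: "det (mat_of_cols m (Fb @ B)) \<noteq> 0" using nz1 e1 vol_nz_det[of m cw] by auto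
  have dBy: "det (mat_of_cols m (B @ y)) \<noteq> 0" using nz2 e2 vol_nz_det[of m cw] by auto
  have G0: "G 0 = []" using dflag_facts(1)[OF hG, of 0] by auto
  define W' where "W' = z @ x"
  have W'f: "length W' = m - b" "set W' \<subseteq> carrier_vec m" unfolding W'_def using lens cars abc by auto
  have Ds: "Delta_s m cw F G H fl hl b c 0 a = vol_sub m B (volV m cw (F b @ B) * volV m cw (B @ H b)) W'"
    unfolding Delta_s_def B_def W'_def z_def x_def using G0 by simp
  have inj: "\<And>v. v \<in> carrier_vec (m - b) \<Longrightarrow> mat_of_cols m B *\<^sub>v v = 0\<^sub>v m \<Longrightarrow> v = 0\<^sub>v (m - b)"
  proof -
    fix v :: "rat vec" assume v: "v \<in> carrier_vec (m - b)" "mat_of_cols m B *\<^sub>v v = 0\<^sub>v m"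
    have "v = 0\<^sub>v (length B)"
      by (rule kernel_pad[of m Fb B "[]"], insert dFbB lens Bf cars v abc, auto)
    then show "v = 0\<^sub>v (m - b)" using Bf by simp
  qed
  have spW: "\<And>w. w \<in> set W' \<Longrightarrow> in_span m B w" using zB xB unfolding W'_def by auto
  obtain cs where cs: "length cs = m - b" "set cs \<subseteq> carrier_vec (m - b)"
    "W' = map (\<lambda>c. mat_of_cols m B *\<^sub>v c) cs"
    "vol_sub m B (volV m cw (F b @ B) * volV m cw (B @ H b)) W' = volV m cw (F b @ B) * volV m cw (B @ H b) * det (mat_of_cols (m - b) cs)"
    using vol_sub_eval[OF Bf(2,1) W'f(2,1) spW inj, of "volV m cw (F b @ B) * volV m cw (B @ H b)"]
    by blast
  have LT: "volV m cw (Fb @ W') = det (mat_of_cols (m - b) cs) * volV m cw (Fb @ B)"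
    unfolding cs(3) by (rule mlalt_lin_transform[OF mlalt_vol_pre Bf(1,2) cs(1,2)], insert cars lens abc, auto)
  have \<alpha>x: "\<alpha>0 x = volV m cw (Fb @ W')" using \<alpha>eq[of x] lens cars unfolding A'eq W'_def by simp
  have "Delta_s m cw F G H fl hl b c 0 a = volV m cw (F b @ B) * volV m cw (B @ H b) * det (mat_of_cols (m - b) cs)"
    using Ds cs(4) by simp
  also have "\<dots> = volV m cw (Fb @ B) * volV m cw (B @ y) * det (mat_of_cols (m - b) cs)" using e1 e2 by simp
  also have "\<dots> = \<alpha>0 x * \<beta>0 y" unfolding \<alpha>x LT \<beta>eq by simp
  finally have RHS: "Delta_s m cw F G H fl hl b c 0 a = \<alpha>0 x * \<beta>0 y" .
  define \<iota> where "\<iota> = wedgeF a \<alpha>0 \<beta>0"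
  define \<psi> where "\<psi> = wedgeF (a + b) \<iota> \<gamma>0"
  have ml\<iota>: "mlalt m (a + b) \<iota>" unfolding \<iota>_def by (rule mlalt_wedgeF[OF ml\<alpha> ml\<beta>])
  have ml\<psi>: "mlalt m m \<psi>" unfolding \<psi>_def using mlalt_wedgeF[OF ml\<iota> ml\<gamma>] abc by simp
  have LHS: "Delta_dual m cw F G H a b c = \<psi> (unit_vecs m) / cw"
    unfolding Delta_dual_def pair_omega_star_def \<psi>_def \<iota>_def \<alpha>0_def \<beta>0_def \<gamma>0_def B_def by simp
  define w where "w = C' @ z"
  have wf: "length w = m" "set w \<subseteq> carrier_vec m" unfolding w_def using lens cars abc by auto
  have char: "\<psi> w = det (mat_of_cols m w) * \<psi> (unit_vecs m)" by (rule mlalt_det_char[OF ml\<psi> wf])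
  have \<gamma>z: "\<gamma>0 z = cw * det (mat_of_cols m w)" using \<gamma>eq[of z] lens cars unfolding w_def volV_def by simp
  have k\<alpha>: "\<And>u1 v. set u1 \<subseteq> carrier_vec m \<Longrightarrow> length u1 = a \<Longrightarrow> v \<in> set u1 \<Longrightarrow> in_span m A' v \<Longrightarrow> \<alpha>0 u1 = 0"
  proof -
    fix u1 :: "rat vec list" and v assume h: "set u1 \<subseteq> carrier_vec m" "length u1 = a" "v \<in> set u1" "in_span m A' v"
    have "volV m cw (A' @ u1) = 0" by (rule vol_zero_span, insert h lens cars abc, auto)
    then show "\<alpha>0 u1 = 0" using \<alpha>eq h by simp
  qed
  have k\<beta>: "\<And>u2 v. set u2 \<subseteq> carrier_vec m \<Longrightarrow> length u2 = b \<Longrightarrow> v \<in> set u2 \<Longrightarrow> in_span m B v \<Longrightarrow> \<beta>0 u2 = 0"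
  proof -
    fix u2 :: "rat vec list" and v assume h: "set u2 \<subseteq> carrier_vec m" "length u2 = b" "v \<in> set u2" "in_span m B v"
    have "volV m cw (B @ u2) = 0" by (rule vol_zero_span, insert h Bf abc, auto)
    then show "\<beta>0 u2 = 0" using \<beta>eq h by simp
  qed
  have k\<gamma>: "\<And>u3 v. set u3 \<subseteq> carrier_vec m \<Longrightarrow> length u3 = c \<Longrightarrow> v \<in> set u3 \<Longrightarrow> in_span m C' v \<Longrightarrow> \<gamma>0 u3 = 0"
  proof -
    fix u3 :: "rat vec list" and v assume h: "set u3 \<subseteq> carrier_vec m" "length u3 = c" "v \<in> set u3" "in_span m C' v"
    have "volV m cw (C' @ u3) = 0" by (rule vol_zero_span, insert h lens cars abc, auto)
    then show "\<gamma>0 u3 = 0" using \<gamma>eq h by simp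
  qed
  have k\<iota>: "\<And>u v. set u \<subseteq> carrier_vec m \<Longrightarrow> length u = a + b \<Longrightarrow> v \<in> set u \<Longrightarrow> in_span m A' v \<Longrightarrow> in_span m B v \<Longrightarrow> \<iota> u = 0"
    unfolding \<iota>_def by (rule wedge_zero, auto intro: k\<alpha> k\<beta>)
  have \<iota>C: "\<iota> C' = \<alpha>0 x * \<beta>0 y"
  proof -
    define SS where "SS = {S. S \<subseteq> {..<length C'} \<and> card S = a}"
    have "SS \<subseteq> Pow {..<length C'}" unfolding SS_def by auto
    then have fin: "finite SS" by (rule finite_subset) simp
    have S0: "{..<a} \<in> SS" unfolding SS_def using lens by auto
    have "\<iota> C' = (\<Sum>S\<in>SS. wterm a \<alpha>0 \<beta>0 C' S)" unfolding \<iota>_def SS_def by (rule wedgeF_wterm)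
    also have "\<dots> = wterm a \<alpha>0 \<beta>0 C' {..<a}"
    proof (rule sum_single[OF fin S0])
      fix S assume S: "S \<in> SS" "S \<noteq> {..<a}"
      have Sp: "S \<subseteq> {..<length C'}" "card S = a" using S unfolding SS_def by auto
      have fS: "finite S" using Sp finite_subset by blast
      have "\<exists>s<a. s \<notin> S"
      proof (rule ccontr)
        assume "\<not> (\<exists>s<a. s \<notin> S)"
        then have "{..<a} \<subseteq> S" by auto
        then have "{..<a} = S" using card_subset_eq[OF fS] Sp by auto
        with S show False by simp
      qed
      then obtain s where s: "s < a" "s \<notin> S" by auto
      have sl: "s < length C'" using s lens by simp
      have Cs: "C' ! s = x ! s" using s lens unfolding C'eq by (simp add: nth_append)
      have "C' ! s \<in> set (nths C' (- S))" using s sl by (auto simp: set_nths)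
      moreover have "in_span m B (C' ! s)" unfolding Cs by (rule xB, insert s lens, simp)
      moreover have "length (nths C' (- S)) = b" using Sp lens by (simp add: len_nths_compl)
      moreover have "set (nths C' (- S)) \<subseteq> carrier_vec m" using nths_carrier[OF cars(6)] by auto
      ultimately have "\<beta>0 (nths C' (- S)) = 0" using k\<beta> by blast
      then show "wterm a \<alpha>0 \<beta>0 C' S = 0" unfolding wterm_def by simp
    qed
    also have "\<dots> = \<alpha>0 x * \<beta>0 y"
    proof -
      have n1: "nths C' {..<a} = x" unfolding C'eq using lens by simp
      have "- {..<a} = {i. a \<le> i}" by auto
      then have n2: "nths C' (- {..<a}) = y" unfolding C'eq using lens drop_eq_nths[of a "x @ y"] by simp
      have sg: "\<Sum>{..<a} - a * (a - 1) div 2 = 0" using sum_lessThan_nat[of a] by simp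
      show ?thesis unfolding wterm_def n1 n2 sg by simp
    qed
    finally show ?thesis .
  qed
  have \<psi>w: "\<psi> w = \<alpha>0 x * \<beta>0 y * \<gamma>0 z"
  proof -
    define SS where "SS = {S. S \<subseteq> {..<length w} \<and> card S = a + b}"
    have "SS \<subseteq> Pow {..<length w}" unfolding SS_def by auto
    then have fin: "finite SS" by (rule finite_subset) simp
    have S0: "{..<a + b} \<in> SS" unfolding SS_def using wf abc by auto
    have "\<psi> w = (\<Sum>S\<in>SS. wterm (a + b) \<iota> \<gamma>0 w S)" unfolding \<psi>_def SS_def by (rule wedgeF_wterm)
    also have "\<dots> = wterm (a + b) \<iota> \<gamma>0 w {..<a + b}"
    proof (rule sum_single[OF fin S0])
      fix S assume S: "S \<in> SS" "S \<noteq> {..<a + b}"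
      have Sp: "S \<subseteq> {..<length w}" "card S = a + b" using S unfolding SS_def by auto
      have fS: "finite S" using Sp finite_subset by blast
      have "\<exists>s\<in>S. a + b \<le> s"
      proof (rule ccontr)
        assume "\<not> (\<exists>s\<in>S. a + b \<le> s)"
        then have "S \<subseteq> {..<a + b}" by auto
        then have "S = {..<a + b}" using card_subset_eq[of "{..<a + b}" S] Sp by auto
        with S show False by simp
      qed
      then obtain s where s: "s \<in> S" "a + b \<le> s" by auto
      have sl: "s < length w" using s Sp by auto
      have ws: "w ! s = z ! (s - (a + b))" using s lens unfolding w_def by (simp add: nth_append)
      have zs: "w ! s \<in> set z" unfolding ws using sl s lens wf abc unfolding w_def by auto
      have "w ! s \<in> set (nths w S)" using s sl by (auto simp: set_nths)
      moreover have "length (nths w S) = a + b" using Sp by (simp add: len_nths_sub)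
      moreover have "set (nths w S) \<subseteq> carrier_vec m" using nths_carrier[OF wf(2)] by auto
      ultimately have "\<iota> (nths w S) = 0" using k\<iota> zA[OF zs] zB[OF zs] by blast
      then show "wterm (a + b) \<iota> \<gamma>0 w S = 0" unfolding wterm_def by simp
    qed
    also have "\<dots> = \<alpha>0 x * \<beta>0 y * \<gamma>0 z"
    proof -
      have n1: "nths w {..<a + b} = C'" unfolding w_def using lens by simp
      have "- {..<a + b} = {i. a + b \<le> i}" by auto
      then have n2: "nths w (- {..<a + b}) = z" unfolding w_def using lens drop_eq_nths[of "a + b" "C' @ z"] by simp
      have sg: "\<Sum>{..<a + b} - (a + b) * (a + b - 1) div 2 = 0" using sum_lessThan_nat[of "a + b"] by simp
      show ?thesis unfolding wterm_def n1 n2 sg \<iota>C by simp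
    qed
    finally show ?thesis .
  qed
  show ?thesis
  proof (cases "det (mat_of_cols m w) = 0")
    case False
    have "det (mat_of_cols m w) * \<psi> (unit_vecs m) = \<psi> w" using char by simp
    also have "\<dots> = \<alpha>0 x * \<beta>0 y * \<gamma>0 z" by (rule \<psi>w)
    also have "\<dots> = det (mat_of_cols m w) * (\<alpha>0 x * \<beta>0 y * cw)" unfolding \<gamma>z by (simp add: algebra_simps)
    finally have "det (mat_of_cols m w) * \<psi> (unit_vecs m) = det (mat_of_cols m w) * (\<alpha>0 x * \<beta>0 y * cw)" .
    then have "\<psi> (unit_vecs m) = \<alpha>0 x * \<beta>0 y * cw" using False by simp
    then show ?thesis unfolding LHS RHS using cw by simp
  next
    case True
    let ?N = "mat_of_cols m w"
    have N: "?N \<in> carrier_mat m m" using wf by auto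
    have "\<exists>v. v \<in> carrier_vec m \<and> v \<noteq> 0\<^sub>v m \<and> ?N *\<^sub>v v = 0\<^sub>v m"
      using det_0_iff_vec_prod_zero_field[OF N] True by blast
    then obtain u where u: "u \<in> carrier_vec m" "u \<noteq> 0\<^sub>v m" "?N *\<^sub>v u = 0\<^sub>v m" by blast
    have w3: "w = x @ y @ z" unfolding w_def C'eq by simp
    have lsum: "length x + length y + length z = m" using lens abc by simp
    have u': "u \<in> carrier_vec (length x + length y + length z)" unfolding lsum by (rule u(1))
    have car3: "set (x @ y @ z) \<subseteq> carrier_vec m" using wf w3 by simp
    define ux where "ux = vec (length x) (\<lambda>i. u $ i)"
    define uy where "uy = vec (length y) (\<lambda>i. u $ (length x + i))"
    define uz where "uz = vec (length z) (\<lambda>i. u $ (length x + length y + i))"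
    have uc: "ux \<in> carrier_vec (length x)" "uy \<in> carrier_vec (length y)" "uz \<in> carrier_vec (length z)"
      unfolding ux_def uy_def uz_def by auto
    have sp3: "?N *\<^sub>v u = mat_of_cols m x *\<^sub>v ux + mat_of_cols m y *\<^sub>v uy + mat_of_cols m z *\<^sub>v uz"
      unfolding w3 ux_def uy_def uz_def by (rule split3(1)[OF u' car3])
    have u0: "ux = 0\<^sub>v (length x) \<Longrightarrow> uy = 0\<^sub>v (length y) \<Longrightarrow> uz = 0\<^sub>v (length z) \<Longrightarrow> u = 0\<^sub>v m"
      using split3(2)[OF u' car3] unfolding ux_def[symmetric] uy_def[symmetric] uz_def[symmetric] lsum .
    define X where "X = mat_of_cols m x *\<^sub>v ux"
    define Y where "Y = mat_of_cols m y *\<^sub>v uy"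
    define Z where "Z = mat_of_cols m z *\<^sub>v uz"
    have XYZc: "X \<in> carrier_vec m" "Y \<in> carrier_vec m" "Z \<in> carrier_vec m" unfolding X_def Y_def Z_def
      by (rule mult_mat_vec_carrier[OF mat_of_cols_carrier(1) uc(1)], rule mult_mat_vec_carrier[OF mat_of_cols_carrier(1) uc(2)],
          rule mult_mat_vec_carrier[OF mat_of_cols_carrier(1) uc(3)])
    have eq: "\<And>r. r < m \<Longrightarrow> X $ r + Y $ r + Z $ r = 0"
    proof -
      fix r assume r: "r < m"
      have "(X + Y + Z) $ r = 0" using u(3) sp3 r unfolding X_def Y_def Z_def by simp
      then show "X $ r + Y $ r + Z $ r = 0" using r XYZc by simp
    qed
    have "in_span m x X" unfolding in_span_def using XYZc(1) uc(1) X_def by blast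
    then have "in_span m B X" by (rule in_span_trans, insert xB Bf, auto)
    then obtain s1 where s1: "s1 \<in> carrier_vec (length B)" "X = mat_of_cols m B *\<^sub>v s1" unfolding in_span_def by auto
    have "in_span m z Z" unfolding in_span_def using XYZc(3) uc(3) Z_def by blast
    then have "in_span m B Z" by (rule in_span_trans, insert zB Bf, auto)
    then obtain s2 where s2: "s2 \<in> carrier_vec (length B)" "Z = mat_of_cols m B *\<^sub>v s2" unfolding in_span_def by auto
    have Bc: "mat_of_cols m B \<in> carrier_mat m (length B)" by simp
    have "mat_of_cols m B *\<^sub>v (s1 + s2) + mat_of_cols m y *\<^sub>v uy = 0\<^sub>v m"
    proof (rule eq_vecI)
      fix r assume "r < dim_vec (0\<^sub>v m :: rat vec)"
      then have r: "r < m" by simp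
      have "mat_of_cols m B *\<^sub>v (s1 + s2) = X + Z" unfolding s1(2) s2(2)
        by (rule mult_add_distrib_mat_vec[OF Bc s1(1) s2(1)])
      then show "(mat_of_cols m B *\<^sub>v (s1 + s2) + mat_of_cols m y *\<^sub>v uy) $ r = 0\<^sub>v m $ r"
        using eq[OF r] r XYZc unfolding Y_def[symmetric] by simp
    qed simp
    then have "s1 + s2 = 0\<^sub>v (length B) \<and> uy = 0\<^sub>v (length y)"
      by (intro kernel2[of m "[]" B y "[]"], insert dBy Bf lens cars s1 s2 uc abc, auto)
    then have uy0: "uy = 0\<^sub>v (length y)" by simp
    have Y0: "\<And>r. r < m \<Longrightarrow> Y $ r = 0"
      unfolding Y_def uy0 mat_of_cols_mult_zero by simp
    have XZ: "\<And>r. r < m \<Longrightarrow> X $ r + Z $ r = 0" using eq Y0 by force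
    have RHS0: "\<alpha>0 x = 0"
    proof -
      have "det (mat_of_cols m (Fb @ z @ x @ [])) = 0"
      proof (rule ccontr)
        assume d: "det (mat_of_cols m (Fb @ z @ x @ [])) \<noteq> 0"
        have "mat_of_cols m z *\<^sub>v uz + mat_of_cols m x *\<^sub>v ux = 0\<^sub>v m"
          by (rule eq_vecI, insert XZ XYZc, auto simp: X_def[symmetric] Z_def[symmetric] add.commute)
        then have "uz = 0\<^sub>v (length z) \<and> ux = 0\<^sub>v (length x)"
          by (intro kernel2[OF d], insert lens cars uc abc, auto)
        then have "u = 0\<^sub>v m" using u0 uy0 by simp
        with u(2) show False by simp
      qed
      then have "volV m cw (Fb @ W') = 0" unfolding W'_def volV_def by simp
      then show ?thesis using \<alpha>x by simp
    qed
    define v where "v = X"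
    have vx: "in_span m x v" unfolding v_def in_span_def using XYZc(1) uc(1) X_def by blast
    have vC: "in_span m C' v" by (rule in_span_trans[OF vx], insert xC cars, auto)
    have vB: "in_span m B v" by (rule in_span_trans[OF vx], insert xB Bf, auto)
    have vz: "v = mat_of_cols m z *\<^sub>v ((-1) \<cdot>\<^sub>v uz)"
    proof -
      have "mat_of_cols m z *\<^sub>v ((-1) \<cdot>\<^sub>v uz) = (-1) \<cdot>\<^sub>v Z" unfolding Z_def
        by (rule mult_mat_vec[of _ m "length z"], insert uc, auto)
      also have "\<dots> = v" unfolding v_def by (rule eq_vecI, insert XZ XYZc, auto simp: add_eq_0_iff)
      finally show ?thesis by simp
    qed
    have vA: "in_span m A' v"
    proof (rule in_span_trans[of m z])
      show "in_span m z v" unfolding in_span_def using vz uc XYZc v_def by auto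
    qed (insert zA cars, auto)
    have vnz: "v \<noteq> 0\<^sub>v m"
    proof
      assume v0: "v = 0\<^sub>v m"
      have hl3: "rev hl = rev (drop (a + b) hl) @ x @ y @ []"
        using C'eq unfolding C'_def by (metis append_Nil2 append_assoc append_take_drop_id rev_append)
      have "mat_of_cols m x *\<^sub>v ux + mat_of_cols m y *\<^sub>v 0\<^sub>v (length y) = 0\<^sub>v m"
        using v0 unfolding v_def X_def[symmetric] mat_of_cols_mult_zero by simp
      moreover have d: "det (mat_of_cols m (rev (drop (a + b) hl) @ x @ y @ [])) \<noteq> 0" unfolding hl3[symmetric] by (rule dhl)
      moreover have "length (rev (drop (a + b) hl) @ x @ y @ []) = m" unfolding hl3[symmetric] using hl by simp
      moreover have "set (rev (drop (a + b) hl) @ x @ y @ []) \<subseteq> carrier_vec m" unfolding hl3[symmetric] using hl by simp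
      ultimately have "ux = 0\<^sub>v (length x) \<and> 0\<^sub>v (length y) = (0\<^sub>v (length y) :: rat vec)"
        using kernel2[of m "rev (drop (a + b) hl)" x y "[]" ux "0\<^sub>v (length y)"] uc by simp
      then have ux0: "ux = 0\<^sub>v (length x)" by simp
      have fl3: "fl = Fb @ z @ drop (b + c) fl @ []"
        using A'eq unfolding A'_def by (metis append_Nil2 append_assoc append_take_drop_id)
      have Z0: "Z = 0\<^sub>v m"
      proof (rule eq_vecI)
        fix r assume "r < dim_vec (0\<^sub>v m :: rat vec)"
        then have r: "r < m" by simp
        have "X $ r = 0" using v0 r unfolding v_def by simp
        then show "Z $ r = 0\<^sub>v m $ r" using XZ[OF r] r by simp
      qed (insert XYZc, auto)
      have "mat_of_cols m z *\<^sub>v uz + mat_of_cols m (drop (b + c) fl) *\<^sub>v 0\<^sub>v (length (drop (b + c) fl)) = 0\<^sub>v m"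
        unfolding Z_def[symmetric] mat_of_cols_mult_zero Z0 by simp
      moreover have "det (mat_of_cols m (Fb @ z @ drop (b + c) fl @ [])) \<noteq> 0" unfolding fl3[symmetric] by (rule dfl)
      moreover have "length (Fb @ z @ drop (b + c) fl @ []) = m" unfolding fl3[symmetric] using fl by simp
      moreover have "set (Fb @ z @ drop (b + c) fl @ []) \<subseteq> carrier_vec m" unfolding fl3[symmetric] using fl by simp
      ultimately have "uz = 0\<^sub>v (length z) \<and> 0\<^sub>v (length (drop (b + c) fl)) = (0\<^sub>v (length (drop (b + c) fl)) :: rat vec)"
        using kernel2[of m Fb z "drop (b + c) fl" "[]" uz "0\<^sub>v (length (drop (b + c) fl))"] uc by simp
      then have "uz = 0\<^sub>v (length z)" by simp
      then have "u = 0\<^sub>v m" using u0 uy0 ux0 by simp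
      with u(2) show False by simp
    qed
    have vc: "v \<in> carrier_vec m" unfolding v_def using XYZc by simp
    obtain t where t: "t < m" "v $ t \<noteq> 0"
    proof -
      have "\<exists>t<m. v $ t \<noteq> 0"
      proof (rule ccontr)
        assume "\<not> (\<exists>t<m. v $ t \<noteq> 0)"
        then have "v = 0\<^sub>v m" using vc by (intro eq_vecI, auto)
        with vnz show False by simp
      qed
      then show ?thesis using that by auto
    qed
    define e' where "e' = (unit_vecs m)[t := v]"
    have e'f: "length e' = m" "set e' \<subseteq> carrier_vec m" unfolding e'_def
      by (simp add: unit_vecs_def, rule set_update_carrier[OF unit_vecs_carrier vc])
    have ve': "v \<in> set e'" unfolding e'_def using t by (simp add: unit_vecs_def set_update_memI)
    have "\<psi> e' = 0" unfolding \<psi>_def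
    proof (rule wedge_zero[OF ve' e'f(2)])
      show "length e' = a + b + c" using e'f abc by simp
      show "\<And>u1. set u1 \<subseteq> carrier_vec m \<Longrightarrow> length u1 = a + b \<Longrightarrow> v \<in> set u1 \<Longrightarrow> \<iota> u1 = 0"
        using k\<iota> vA vB by blast
      show "\<And>u2. set u2 \<subseteq> carrier_vec m \<Longrightarrow> length u2 = c \<Longrightarrow> v \<in> set u2 \<Longrightarrow> \<gamma>0 u2 = 0"
        using k\<gamma> vC by blast
    qed
    moreover have "\<psi> e' = v $ t * \<psi> (unit_vecs m)"
      using mlalt_det_char[OF ml\<psi> e'f] det_unit_update[OF vc t(1)] unfolding e'_def by simp
    ultimately have "\<psi> (unit_vecs m) = 0" using t by simp
    then show ?thesis unfolding LHS RHS RHS0 by simp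
  qed
qed

end
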